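(* James bundles are natural: if $f\colon C\to D$ is a $\square$-map, then $\zeta^n(C)$ is the pull-back $f^*(\zeta^n(D))$; that is, the map $|J^n(C)|\to|J^n(D)|$ induced by $(x,\lambda)\mapsto(f(x),\lambda)$ together with the projections $p_n$ forms a pull-back square over $|f|\colon|C|\to|D|$.
   Context: A $\square$-set $C$: sets $C_n$, face maps $\partial_i^\epsilon\colon C_n\to C_{n-1}$ ($1\le i\le n$, $\epsilon\in\{0,1\}$) with $\partial^\eta_{j-1}\partial^\epsilon_i=\partial^\epsilon_i\partial^\eta_j$ for $i<j$; equivalently a contravariant functor on cubes $I^n$ and face maps $\mu$ (order-preserving insertion of constant coordinates $0$ or $1$), with induced maps $\mu^*$. A $\square$-map $f\colon C\to D$ is a family $f_n\colon C_n\to D_n$ commuting with all face maps. Realisation $|C|=\coprod C_n\times I^n/((\mu^*x,t)\sim(x,\mu t))$. $P^{n+k}_k$ is the set of projections $\lambda\colon I^{n+k}\to I^k$, $(x_1,\dots,x_{n+k})\mapsto(x_{i_1},\dots,x_{i_k})$, $i_1<\dots<i_k$. For a face map $\mu\colon I^l\to I^k$ there are unique $\mu^\sharp(\lambda)\in P^{n+l}_l$ and face map $\mu_\lambda\colon I^{n+l}\to I^{n+k}$ with $\lambda\mu_\lambda=\mu\,\mu^\sharp(\lambda)$ a pull-back square. The $n$-th James complex $J^n(C)$ has $J^n(C)_k=C_{n+k}\times P^{n+k}_k$ and $\mu^*(x,\lambda)=(\mu^*_\lambda x,\mu^\sharp(\lambda))$. With $s_\lambda\colon I^k\to I^{n+k}$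 the section of $\lambda$ inserting $1/2$ in the collapsed coordinates, $p_n\colon|J^n(C)|\to|C|$, $p_n[(c,\lambda),t]=[c,s_\lambda(t)]$, is a codimension-$n$ mock bundle projection; this mock bundle is the $n$-th James bundle $\zeta^n(C)$. *)

theory Defs
  imports "HOL-Analysis.Analysis"
begin

text \<open>A cubical set (box-set) is given by its cells Cs n (the set C_n) and face maps
  d n i e : C_n \<rightarrow> C_(n-1), for 1 \<le> i \<le> n, where e = False means epsilon = 0
  and e = True means epsilon = 1.\<close>

definition is_cset :: "(nat \<Rightarrow> 'a set) \<Rightarrow> (nat \<Rightarrow> nat \<Rightarrow> bool \<Rightarrow> 'a \<Rightarrow> 'a) \<Rightarrow> bool" where
  "is_cset Cs d \<longleftrightarrow>
     (\<forall>n i e x. 1 \<le> i \<and> i \<le> n \<and> x \<in> Cs n \<longrightarrow> d n i e x \<in> Cs (n - 1)) \<and>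
     (\<forall>n i j e h x. 1 \<le> i \<and> i < j \<and> j \<le> n \<and> x \<in> Cs n \<longrightarrow>
        d (n - 1) (j - 1) h (d n i e x) = d (n - 1) i e (d n j h x))"

definition is_cmap :: "(nat \<Rightarrow> 'a set) \<Rightarrow> (nat \<Rightarrow> nat \<Rightarrow> bool \<Rightarrow> 'a \<Rightarrow> 'a) \<Rightarrow>
    (nat \<Rightarrow> 'b set) \<Rightarrow> (nat \<Rightarrow> nat \<Rightarrow> bool \<Rightarrow> 'b \<Rightarrow> 'b) \<Rightarrow> (nat \<Rightarrow> 'a \<Rightarrow> 'b) \<Rightarrow> bool" where
  "is_cmap Cs d Ds d' f \<longleftrightarrow>
     (\<forall>n x. x \<in> Cs n \<longrightarrow> f n x \<in> Ds n) \<and>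
     (\<forall>n i e x. 1 \<le> i \<and> i \<le> n \<and> x \<in> Cs n \<longrightarrow> f (n - 1) (d n i e x) = d' n i e (f n x))"

text \<open>The cube I^n, as functions nat \<Rightarrow> real with coordinates 0..n-1 (coordinate number
  m+1 is stored at index m), all other coordinates 0.\<close>
definition cube :: "nat \<Rightarrow> (nat \<Rightarrow> real) set" where
  "cube n = {t. (\<forall>i<n. 0 \<le> t i \<and> t i \<le> 1) \<and> (\<forall>i\<ge>n. t i = 0)}"

definition cube_top :: "nat \<Rightarrow> (nat \<Rightarrow> real) topology" where
  "cube_top n = subtopology euclidean (cube n)"

text \<open>Elementary face map delta^e_i : I^(n-1) \<rightarrow> I^n inserting the constant e at
  (1-based) position i.\<close>
definition cube_face :: "nat \<Rightarrow> bool \<Rightarrow> (nat \<Rightarrow> real) \<Rightarrow> (nat \<Rightarrow> real)" where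
  "cube_face i e t = (\<lambda>m. if m < i - 1 then t m else if m = i - 1 then (if e then 1 else 0) else t (m - 1))"

definition cdisj :: "(nat \<Rightarrow> 'a set) \<Rightarrow> ((nat \<times> 'a) \<times> (nat \<Rightarrow> real)) topology" where
  "cdisj Cs = sum_topology (\<lambda>(n, x). cube_top n) (Sigma UNIV Cs)"

text \<open>Generating identifications (d^e_i x, t) ~ (x, delta^e_i t); these generate the same
  equivalence relation as (mu^* x, t) ~ (x, mu t) for all face maps mu.\<close>
definition cgen :: "(nat \<Rightarrow> 'a set) \<Rightarrow> (nat \<Rightarrow> nat \<Rightarrow> bool \<Rightarrow> 'a \<Rightarrow> 'a) \<Rightarrow>
    (((nat \<times> 'a) \<times> (nat \<Rightarrow> real)) \<times> ((nat \<times> 'a) \<times> (nat \<Rightarrow> real))) set" where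
  "cgen Cs d = {(((n - 1, d n i e x), t), ((n, x), cube_face i e t)) | n i e x t.
                  1 \<le> i \<and> i \<le> n \<and> x \<in> Cs n \<and> t \<in> cube (n - 1)}"

definition crel :: "(nat \<Rightarrow> 'a set) \<Rightarrow> (nat \<Rightarrow> nat \<Rightarrow> bool \<Rightarrow> 'a \<Rightarrow> 'a) \<Rightarrow>
    (((nat \<times> 'a) \<times> (nat \<Rightarrow> real)) \<times> ((nat \<times> 'a) \<times> (nat \<Rightarrow> real))) set" where
  "crel Cs d = (cgen Cs d \<union> (cgen Cs d)\<inverse>)\<^sup>* \<inter> (topspace (cdisj Cs) \<times> topspace (cdisj Cs))"

definition quotient_top :: "'a topology \<Rightarrow> ('a \<times> 'a) set \<Rightarrow> 'a set topology" where
  "quotient_top X R = topology (\<lambda>U. U \<subseteq> topspace X // R \<and> openin X (\<Union>U))"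

definition realisation :: "(nat \<Rightarrow> 'a set) \<Rightarrow> (nat \<Rightarrow> nat \<Rightarrow> bool \<Rightarrow> 'a \<Rightarrow> 'a) \<Rightarrow>
    ((nat \<times> 'a) \<times> (nat \<Rightarrow> real)) set topology" where
  "realisation Cs d = quotient_top (cdisj Cs) (crel Cs d)"

definition liftmap :: "('b \<times> 'b) set \<Rightarrow> ('a \<Rightarrow> 'b) \<Rightarrow> 'a set \<Rightarrow> 'b set" where
  "liftmap R g X = R `` (g ` X)"

definition realmap :: "(nat \<Rightarrow> 'b set) \<Rightarrow> (nat \<Rightarrow> nat \<Rightarrow> bool \<Rightarrow> 'b \<Rightarrow> 'b) \<Rightarrow> (nat \<Rightarrow> 'a \<Rightarrow> 'b) \<Rightarrow>
    ((nat \<times> 'a) \<times> (nat \<Rightarrow> real)) set \<Rightarrow> ((nat \<times> 'b) \<times> (nat \<Rightarrow> real)) set" where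
  "realmap Ds d' f = liftmap (crel Ds d') (\<lambda>((n, x), t). ((n, f n x), t))"

text \<open>A projection lambda in P^(n+k)_k, (x_1..x_(n+k)) \<mapsto> (x_(i_1),..,x_(i_k)),
  is represented by the set S = {i_1,..,i_k} \<subseteq> {1..n+k}. For the elementary face
  mu = delta^e_j : I^(k-1) \<rightarrow> I^k one has mu_lambda = delta^e_(i_j) and mu^#(lambda) the
  projection onto S - {i_j} renumbered.\<close>
definition jcells :: "nat \<Rightarrow> (nat \<Rightarrow> 'a set) \<Rightarrow> nat \<Rightarrow> ('a \<times> nat set) set" where
  "jcells n Cs k = {(x, S). x \<in> Cs (n + k) \<and> S \<subseteq> {1..n + k} \<and> card S = k}"

definition jface :: "nat \<Rightarrow> (nat \<Rightarrow> nat \<Rightarrow> bool \<Rightarrow> 'a \<Rightarrow> 'a) \<Rightarrow>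
    nat \<Rightarrow> nat \<Rightarrow> bool \<Rightarrow> ('a \<times> nat set) \<Rightarrow> ('a \<times> nat set)" where
  "jface n d k j e xS = (case xS of (x, S) \<Rightarrow>
     (let s = sorted_list_of_set S ! (j - 1) in
       (d (n + k) s e x, (\<lambda>i. if i < s then i else i - 1) ` (S - {s}))))"

text \<open>The section s_lambda : I^k \<rightarrow> I^(n+k) inserting 1/2 in the collapsed coordinates.\<close>
definition jsect :: "nat set \<Rightarrow> nat \<Rightarrow> (nat \<Rightarrow> real) \<Rightarrow> (nat \<Rightarrow> real)" where
  "jsect S m t = (\<lambda>p. if p < m then (if Suc p \<in> S then t (card {q \<in> S. q \<le> p}) else 1 / 2) else 0)"

definition jproj :: "nat \<Rightarrow> (nat \<Rightarrow> 'a set) \<Rightarrow> (nat \<Rightarrow> nat \<Rightarrow> bool \<Rightarrow> 'a \<Rightarrow> 'a) \<Rightarrow>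
    ((nat \<times> ('a \<times> nat set)) \<times> (nat \<Rightarrow> real)) set \<Rightarrow> ((nat \<times> 'a) \<times> (nat \<Rightarrow> real)) set" where
  "jproj n Cs d = liftmap (crel Cs d) (\<lambda>((k, (x, S)), t). ((n + k, x), jsect S (n + k) t))"

definition jmap :: "nat \<Rightarrow> (nat \<Rightarrow> 'b set) \<Rightarrow> (nat \<Rightarrow> nat \<Rightarrow> bool \<Rightarrow> 'b \<Rightarrow> 'b) \<Rightarrow> (nat \<Rightarrow> 'a \<Rightarrow> 'b) \<Rightarrow>
    ((nat \<times> ('a \<times> nat set)) \<times> (nat \<Rightarrow> real)) set \<Rightarrow> ((nat \<times> ('b \<times> nat set)) \<times> (nat \<Rightarrow> real)) set" where
  "jmap n Ds d' f = liftmap (crel (jcells n Ds) (jface n d'))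
      (\<lambda>((k, (x, S)), t). ((k, (f (n + k) x, S)), t))"

end

theory Submission
  imports Defs
begin

definition ev :: "bool \<Rightarrow> real" where "ev e = (if e then 1 else 0)"

lemma cube_face_apply: "cube_face i e t m = (if m < i - 1 then t m else if m = i - 1 then ev e else t (m - 1))"
  by (simp add: cube_face_def ev_def)

lemma cube_face_in_cube: "1 \<le> i \<Longrightarrow> i \<le> N \<Longrightarrow> t \<in> cube (N - 1) \<Longrightarrow> cube_face i e t \<in> cube N"
  unfolding cube_def cube_face_def by auto

fun dpat :: "(nat \<Rightarrow> nat \<Rightarrow> bool \<Rightarrow> 'a \<Rightarrow> 'a) \<Rightarrow> (nat \<Rightarrow> bool option) \<Rightarrow> nat \<Rightarrow> nat \<Rightarrow> 'a \<Rightarrow> 'a" where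
  "dpat d \<beta> 0 N x = x"
| "dpat d \<beta> (Suc m) N x = (case \<beta> m of None \<Rightarrow> dpat d \<beta> m N x | Some e \<Rightarrow> dpat d \<beta> m (N - 1) (d N (Suc m) e x))"

fun emb :: "(nat \<Rightarrow> bool option) \<Rightarrow> nat \<Rightarrow> (nat \<Rightarrow> real) \<Rightarrow> (nat \<Rightarrow> real)" where
  "emb \<beta> 0 w = w"
| "emb \<beta> (Suc m) w = (case \<beta> m of None \<Rightarrow> emb \<beta> m w | Some e \<Rightarrow> cube_face (Suc m) e (emb \<beta> m w))"

definition rmc :: "nat \<Rightarrow> (nat \<Rightarrow> 'b) \<Rightarrow> (nat \<Rightarrow> 'b)" where
  "rmc m u = (\<lambda>p. if p < m then u p else u (Suc p))"

fun strip :: "(nat \<Rightarrow> bool option) \<Rightarrow> nat \<Rightarrow> (nat \<Rightarrow> real) \<Rightarrow> (nat \<Rightarrow> real)" where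
  "strip \<beta> 0 u = u"
| "strip \<beta> (Suc m) u = (case \<beta> m of None \<Rightarrow> strip \<beta> m u | Some e \<Rightarrow> strip \<beta> m (rmc m u))"

fun cnt :: "(nat \<Rightarrow> bool option) \<Rightarrow> nat \<Rightarrow> nat" where
  "cnt \<beta> 0 = 0"
| "cnt \<beta> (Suc m) = (case \<beta> m of None \<Rightarrow> cnt \<beta> m | Some e \<Rightarrow> Suc (cnt \<beta> m))"

definition ins :: "(nat \<Rightarrow> 'b option) \<Rightarrow> nat \<Rightarrow> 'b \<Rightarrow> (nat \<Rightarrow> 'b option)" where
  "ins \<beta> i e = (\<lambda>p. if p < i then \<beta> p else if p = i then Some e else \<beta> (p - 1))"

definition bpat :: "(nat \<Rightarrow> real) \<Rightarrow> nat \<Rightarrow> (nat \<Rightarrow> bool option)" where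
  "bpat u M = (\<lambda>p. if p < M then (if u p = 0 then Some False else if u p = 1 then Some True else None) else None)"

lemma cnt_le: "cnt \<beta> m \<le> m"
  by (induction m) (auto split: option.splits)

lemma cnt_le_add: "m \<le> N \<Longrightarrow> cnt \<beta> N \<le> cnt \<beta> m + (N - m)"
proof (induction N)
  case (Suc N) then show ?case
    by (cases "m = Suc N") (auto split: option.splits)
qed simp

lemma dpat_cong: "(\<And>p. p < m \<Longrightarrow> \<beta> p = \<beta>' p) \<Longrightarrow> dpat d \<beta> m N x = dpat d \<beta>' m N x"
  by (induction m arbitrary: N x) (auto split: option.splits)

lemma emb_cong: "(\<And>p. p < m \<Longrightarrow> \<beta> p = \<beta>' p) \<Longrightarrow> emb \<beta> m w = emb \<beta>' m w"
  by (induction m) (auto split: option.splits)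

lemma strip_cong: "(\<And>p. p < m \<Longrightarrow> \<beta> p = \<beta>' p) \<Longrightarrow> strip \<beta> m u = strip \<beta>' m u"
  by (induction m arbitrary: u) (auto split: option.splits)

lemma cnt_cong: "(\<And>p. p < m \<Longrightarrow> \<beta> p = \<beta>' p) \<Longrightarrow> cnt \<beta> m = cnt \<beta>' m"
  by (induction m) (auto split: option.splits)

lemma none_below:
  assumes "\<And>p. p < m \<Longrightarrow> \<beta> p = None"
  shows "dpat d \<beta> m N x = x" "strip \<beta> m u = u" "cnt \<beta> m = 0" "emb \<beta> m w = w"
  using assms by (induction m arbitrary: N x u) auto

lemma emb_cube: "w \<in> cube K \<Longrightarrow> m \<le> K + cnt \<beta> m \<Longrightarrow> emb \<beta> m w \<in> cube (K + cnt \<beta> m)"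
proof (induction m)
  case (Suc m)
  show ?case
  proof (cases "\<beta> m")
    case None with Suc show ?thesis by auto
  next
    case (Some e)
    with Suc have "emb \<beta> m w \<in> cube (K + cnt \<beta> m)" by auto
    then show ?thesis using Some Suc.prems
      by (auto intro!: cube_face_in_cube[where N="Suc (K + cnt \<beta> m)", simplified])
  qed
qed simp

lemma emb_val:
  "emb \<beta> m w p = (if p < m then (case \<beta> p of Some e \<Rightarrow> ev e | None \<Rightarrow> w (p - cnt \<beta> p)) else w (p - cnt \<beta> m))"
proof (induction m arbitrary: p)
  case 0 then show ?case by simp
next
  case (Suc m)
  show ?case
  proof (cases "\<beta> m")
    case None
    then show ?thesis using Suc[of p] by (auto simp: less_Suc_eq)
  next
    case (Some e)
    have c: "cnt \<beta> m \<le> m" by (rule cnt_le)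
    show ?thesis using Some Suc[of p] Suc[of "p - 1"] c
      by (auto simp: cube_face_apply less_Suc_eq)
  qed
qed

lemma rank_surj: "j < m - cnt \<beta> m \<Longrightarrow> \<exists>p<m. \<beta> p = None \<and> p - cnt \<beta> p = j"
proof (induction m)
  case (Suc m)
  show ?case
  proof (cases "\<beta> m")
    case None
    show ?thesis
    proof (cases "j < m - cnt \<beta> m")
      case True with Suc None show ?thesis by (auto intro: less_SucI)
    next
      case False with Suc.prems None cnt_le[of \<beta> m] show ?thesis
        by (intro exI[of _ m]) auto
    qed
  next
    case (Some e) with Suc show ?thesis using cnt_le[of \<beta> m] by (auto intro: less_SucI)
  qed
qed simp

lemma rank_lt: "p < m \<Longrightarrow> \<beta> p = None \<Longrightarrow> p - cnt \<beta> p < m - cnt \<beta> m"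
proof -
  assume a: "p < m" "\<beta> p = None"
  have "cnt \<beta> m \<le> cnt \<beta> (Suc p) + (m - Suc p)" using a by (intro cnt_le_add) auto
  moreover have "cnt \<beta> (Suc p) = cnt \<beta> p" using a by simp
  moreover have "cnt \<beta> p \<le> p" by (rule cnt_le)
  ultimately show ?thesis using a by linarith
qed

lemma strip_emb:
  "(\<And>p e. p < m \<Longrightarrow> \<beta> p = Some e \<Longrightarrow> u p = ev e) \<Longrightarrow> emb \<beta> m (strip \<beta> m u) = u"
proof (induction m arbitrary: u)
  case (Suc m)
  show ?case
  proof (cases "\<beta> m")
    case None with Suc show ?thesis by auto
  next
    case (Some e)
    have "emb \<beta> m (strip \<beta> m (rmc m u)) = rmc m u"
      using Suc.prems by (intro Suc.IH) (auto simp: rmc_def)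
    moreover have "cube_face (Suc m) e (rmc m u) = u"
      using Suc.prems[of m e] Some by (auto simp: cube_face_apply rmc_def fun_eq_iff)
    ultimately show ?thesis using Some by simp
  qed
qed simp

lemma rmc_cube: "u \<in> cube K \<Longrightarrow> m < K \<Longrightarrow> rmc m u \<in> cube (K - 1)"
  unfolding cube_def rmc_def by auto

lemma strip_cube: "u \<in> cube K \<Longrightarrow> m \<le> K \<Longrightarrow> strip \<beta> m u \<in> cube (K - cnt \<beta> m)"
proof (induction m arbitrary: u K)
  case (Suc m)
  show ?case
  proof (cases "\<beta> m")
    case None with Suc show ?thesis by auto
  next
    case (Some e)
    have "strip \<beta> m (rmc m u) \<in> cube (K - 1 - cnt \<beta> m)"
      using Suc by (intro Suc.IH rmc_cube) auto
    then show ?thesis using Some by simp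
  qed
qed simp

lemma strip_val_hi: "cnt \<beta> m + j \<ge> m \<Longrightarrow> strip \<beta> m u j = u (j + cnt \<beta> m)"
proof (induction m arbitrary: u j)
  case (Suc m)
  show ?case
  proof (cases "\<beta> m")
    case None with Suc show ?thesis by auto
  next
    case (Some e) with Suc show ?thesis by (auto simp: rmc_def)
  qed
qed simp

lemma strip_val_lo: "j < m - cnt \<beta> m \<Longrightarrow> \<exists>p<m. \<beta> p = None \<and> strip \<beta> m u j = u p"
proof (induction m arbitrary: u j)
  case (Suc m)
  show ?case
  proof (cases "\<beta> m")
    case None
    show ?thesis
    proof (cases "j < m - cnt \<beta> m")
      case True
      then obtain p where "p < m" "\<beta> p = None" "strip \<beta> m u j = u p" using Suc.IH by blast
      then show ?thesis using None by (intro exI[of _ p]) auto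
    next
      case False
      then have "strip \<beta> m u j = u (j + cnt \<beta> m)" by (intro strip_val_hi) auto
      moreover have "j + cnt \<beta> m = m" using False Suc.prems None cnt_le[of \<beta> m] by auto
      ultimately show ?thesis using None by (intro exI[of _ m]) auto
    qed
  next
    case (Some e)
    then obtain p where "p < m" "\<beta> p = None" "strip \<beta> m (rmc m u) j = rmc m u p"
      using Suc.IH[of j "rmc m u"] Suc.prems by auto
    then show ?thesis using Some by (intro exI[of _ p]) (auto simp: rmc_def)
  qed
qed simp

lemma cnt_ins: "i \<le> m \<Longrightarrow> cnt (ins \<beta> i e) (Suc m) = Suc (cnt \<beta> m)"
proof (induction m)
  case 0 then show ?case by (simp add: ins_def)
next
  case (Suc m)
  show ?case
  proof (cases "i = Suc m")
    case True
    then have "cnt (ins \<beta> i e) (Suc m) = cnt \<beta> (Suc m)" by (intro cnt_cong) (auto simp: ins_def)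
    then show ?thesis using True by (simp add: ins_def)
  next
    case False
    with Suc have "i \<le> m" by auto
    with Suc.IH show ?thesis by (auto simp: ins_def split: option.splits)
  qed
qed

lemma emb_ins: "i \<le> m \<Longrightarrow> emb (ins \<beta> i e) (Suc m) w = cube_face (Suc i) e (emb \<beta> m w)"
proof (induction m)
  case 0 then show ?case by (simp add: ins_def)
next
  case (Suc m)
  show ?case
  proof (cases "i = Suc m")
    case True
    then have "emb (ins \<beta> i e) (Suc m) w = emb \<beta> (Suc m) w" by (intro emb_cong) (auto simp: ins_def)
    then show ?thesis using True by (simp add: ins_def)
  next
    case False
    with Suc have im: "i \<le> m" by auto
    show ?thesis
    proof (cases "\<beta> m")
      case None then show ?thesis using Suc.IH im by (simp add: ins_def)
    next
      case (Some e')
      have "ins \<beta> i e (Suc m) = Some e'" using im Some by (simp add: ins_def)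
      then show ?thesis using Suc.IH im Some
        by (auto simp: cube_face_apply fun_eq_iff)
    qed
  qed
qed

lemma rmc_rmc: "i \<le> m \<Longrightarrow> rmc i (rmc (Suc m) u) = rmc m (rmc i u)"
  by (auto simp: rmc_def fun_eq_iff)

lemma strip_ins: "i \<le> m \<Longrightarrow> strip (ins \<beta> i e) (Suc m) u = strip \<beta> m (rmc i u)"
proof (induction m arbitrary: u)
  case 0 then show ?case by (simp add: ins_def)
next
  case (Suc m)
  show ?case
  proof (cases "i = Suc m")
    case True
    then have "strip (ins \<beta> i e) (Suc m) = strip \<beta> (Suc m)" by (intro ext strip_cong) (auto simp: ins_def)
    then show ?thesis using True by (simp add: ins_def)
  next
    case False
    with Suc have im: "i \<le> m" by auto
    show ?thesis
    proof (cases "\<beta> m")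
      case None then show ?thesis using Suc.IH im by (simp add: ins_def)
    next
      case (Some e')
      have "ins \<beta> i e (Suc m) = Some e'" using im Some by (simp add: ins_def)
      then show ?thesis using Suc.IH im Some by (simp add: rmc_rmc)
    qed
  qed
qed

lemma rmc_face: "rmc i (cube_face (Suc i) e t) = t"
  by (auto simp: rmc_def cube_face_def fun_eq_iff)

lemma bpat_face: "t \<in> cube (N - 1) \<Longrightarrow> 1 \<le> i \<Longrightarrow> i \<le> N \<Longrightarrow>
   bpat (cube_face i e t) N = ins (bpat t (N - 1)) (i - 1) e"
  unfolding bpat_def ins_def cube_face_def cube_def by (auto simp: fun_eq_iff)

definition interior_pt :: "((nat \<times> 'a) \<times> (nat \<Rightarrow> real)) \<Rightarrow> bool" where
  "interior_pt P = (case P of ((M, x), u) \<Rightarrow> (\<forall>p<M. 0 < u p \<and> u p < 1))"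

lemma topspace_cube_top[simp]: "topspace (cube_top n) = cube n"
  by (simp add: cube_top_def)

lemma topspace_cdisj: "topspace (cdisj Cs) = {((m, x), t). x \<in> Cs m \<and> t \<in> cube m}"
  by (auto simp: cdisj_def)

locale cset =
  fixes Cs :: "nat \<Rightarrow> 'a set" and d :: "nat \<Rightarrow> nat \<Rightarrow> bool \<Rightarrow> 'a \<Rightarrow> 'a"
  assumes cs: "is_cset Cs d"
begin

lemma d_mem: "1 \<le> i \<Longrightarrow> i \<le> n \<Longrightarrow> x \<in> Cs n \<Longrightarrow> d n i e x \<in> Cs (n - 1)"
  using cs unfolding is_cset_def by blast

lemma d_comm: "1 \<le> i \<Longrightarrow> i < j \<Longrightarrow> j \<le> n \<Longrightarrow> x \<in> Cs n \<Longrightarrow>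
    d (n - 1) (j - 1) h (d n i e x) = d (n - 1) i e (d n j h x)"
  using cs unfolding is_cset_def by blast

abbreviation "TOP \<equiv> topspace (cdisj Cs)"

lemma TOP_iff: "((m, x), t) \<in> TOP \<longleftrightarrow> x \<in> Cs m \<and> t \<in> cube m"
  by (simp add: topspace_cdisj)

lemma dpat_mem: "m \<le> N \<Longrightarrow> x \<in> Cs N \<Longrightarrow> dpat d \<beta> m N x \<in> Cs (N - cnt \<beta> m)"
proof (induction m arbitrary: N x)
  case (Suc m)
  show ?case
  proof (cases "\<beta> m")
    case None with Suc show ?thesis by auto
  next
    case (Some e)
    have "d N (Suc m) e x \<in> Cs (N - 1)" using Suc.prems by (intro d_mem) auto
    then have "dpat d \<beta> m (N - 1) (d N (Suc m) e x) \<in> Cs (N - 1 - cnt \<beta> m)"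
      using Suc by (intro Suc.IH) auto
    then show ?thesis using Some by simp
  qed
qed simp

lemma dpat_ins: "i \<le> m \<Longrightarrow> m \<le> N \<Longrightarrow> x \<in> Cs (Suc N) \<Longrightarrow>
   dpat d (ins \<beta> i e) (Suc m) (Suc N) x = dpat d \<beta> m N (d (Suc N) (Suc i) e x)"
proof (induction m arbitrary: N x)
  case 0 then show ?case by (simp add: ins_def)
next
  case (Suc m)
  show ?case
  proof (cases "i = Suc m")
    case True
    then have "dpat d (ins \<beta> i e) (Suc m) = dpat d \<beta> (Suc m)" by (intro ext dpat_cong) (auto simp: ins_def)
    then show ?thesis using True by (simp add: ins_def)
  next
    case False
    with Suc have im: "i \<le> m" by auto
    show ?thesis
    proof (cases "\<beta> m")
      case None then show ?thesis using Suc im by (simp add: ins_def)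
    next
      case (Some e')
      have ins: "ins \<beta> i e (Suc m) = Some e'" using im Some by (simp add: ins_def)
      obtain N' where N': "N = Suc N'" using Suc.prems by (cases N) auto
      have x': "d (Suc N) (Suc (Suc m)) e' x \<in> Cs N" using Suc.prems by (metis d_mem diff_Suc_1 Suc_le_mono le_add1 plus_1_eq_Suc)
      have "dpat d (ins \<beta> i e) (Suc (Suc m)) (Suc N) x
          = dpat d (ins \<beta> i e) (Suc m) N (d (Suc N) (Suc (Suc m)) e' x)" using ins by simp
      also have "\<dots> = dpat d \<beta> m N' (d N (Suc i) e (d (Suc N) (Suc (Suc m)) e' x))"
        using Suc.IH[of N' "d (Suc N) (Suc (Suc m)) e' x"] im Suc.prems x' N' by simp
      also have "d N (Suc i) e (d (Suc N) (Suc (Suc m)) e' x) = d N (Suc m) e' (d (Suc N) (Suc i) e x)"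
        using d_comm[of "Suc i" "Suc (Suc m)" "Suc N" x e' e] im Suc.prems by simp
      finally show ?thesis using Some N' by simp
    qed
  qed
qed

abbreviation "SYM \<equiv> (cgen Cs d \<union> (cgen Cs d)\<inverse>)\<^sup>*"

lemma SYM_sym: "(P, Q) \<in> SYM \<Longrightarrow> (Q, P) \<in> SYM"
proof -
  assume "(P, Q) \<in> SYM"
  then have "(Q, P) \<in> ((cgen Cs d \<union> (cgen Cs d)\<inverse>)\<inverse>)\<^sup>*" by (simp add: rtrancl_converse)
  moreover have "(cgen Cs d \<union> (cgen Cs d)\<inverse>)\<inverse> = cgen Cs d \<union> (cgen Cs d)\<inverse>" by auto
  ultimately show ?thesis by simp
qed

lemma cgen_SYM: "1 \<le> i \<Longrightarrow> i \<le> N \<Longrightarrow> x \<in> Cs N \<Longrightarrow> t \<in> cube (N - 1) \<Longrightarrow>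
   (((N - 1, d N i e x), t), ((N, x), cube_face i e t)) \<in> SYM"
  unfolding cgen_def by blast

lemma rel_emb: "x \<in> Cs N \<Longrightarrow> m \<le> N \<Longrightarrow> w \<in> cube (N - cnt \<beta> m) \<Longrightarrow>
  (((N - cnt \<beta> m, dpat d \<beta> m N x), w), ((N, x), emb \<beta> m w)) \<in> SYM"
proof (induction m arbitrary: N x)
  case (Suc m)
  show ?case
  proof (cases "\<beta> m")
    case None with Suc show ?thesis by auto
  next
    case (Some e)
    have x': "d N (Suc m) e x \<in> Cs (N - 1)" using Suc.prems by (intro d_mem) auto
    have 1: "(((N - 1 - cnt \<beta> m, dpat d \<beta> m (N - 1) (d N (Suc m) e x)), w),
              ((N - 1, d N (Suc m) e x), emb \<beta> m w)) \<in> SYM"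
      using Suc Some x' by (intro Suc.IH) auto
    have c: "cnt \<beta> m \<le> m" by (rule cnt_le)
    have "emb \<beta> m w \<in> cube (N - 1 - cnt \<beta> m + cnt \<beta> m)"
      using Suc.prems Some c by (intro emb_cube) auto
    then have "emb \<beta> m w \<in> cube (N - 1)" using c Suc.prems by simp
    then have 2: "(((N - 1, d N (Suc m) e x), emb \<beta> m w), ((N, x), cube_face (Suc m) e (emb \<beta> m w))) \<in> SYM"
      using Suc.prems by (intro cgen_SYM) auto
    show ?thesis using rtrancl_trans[OF 1 2] Some by simp
  qed
qed simp

definition nf :: "((nat \<times> 'a) \<times> (nat \<Rightarrow> real)) \<Rightarrow> ((nat \<times> 'a) \<times> (nat \<Rightarrow> real))" where
  "nf P = (case P of ((M, x), u) \<Rightarrow>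
     ((M - cnt (bpat u M) M, dpat d (bpat u M) M M x), strip (bpat u M) M u))"

lemma nf_TOP: "P \<in> TOP \<Longrightarrow> nf P \<in> TOP"
  by (auto simp: topspace_cdisj nf_def intro!: dpat_mem strip_cube)

lemma P_nf: "P \<in> TOP \<Longrightarrow> (nf P, P) \<in> SYM"
proof -
  assume P: "P \<in> TOP"
  obtain M x u where Pe: "P = ((M, x), u)" by (metis prod.collapse)
  have xu: "x \<in> Cs M" "u \<in> cube M" using P Pe by (auto simp: topspace_cdisj)
  have "emb (bpat u M) M (strip (bpat u M) M u) = u"
    by (rule strip_emb) (auto simp: bpat_def ev_def split: if_splits)
  moreover have "(((M - cnt (bpat u M) M, dpat d (bpat u M) M M x), strip (bpat u M) M u),
      ((M, x), emb (bpat u M) M (strip (bpat u M) M u))) \<in> SYM"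
    using xu by (intro rel_emb strip_cube) auto
  ultimately show ?thesis by (simp add: Pe nf_def)
qed

lemma nf_step: "1 \<le> i \<Longrightarrow> i \<le> N \<Longrightarrow> x \<in> Cs N \<Longrightarrow> t \<in> cube (N - 1) \<Longrightarrow>
   nf ((N - 1, d N i e x), t) = nf ((N, x), cube_face i e t)"
proof -
  assume a: "1 \<le> i" "i \<le> N" "x \<in> Cs N" "t \<in> cube (N - 1)"
  obtain N0 where N0: "N = Suc N0" using a by (cases N) auto
  define \<beta> where "\<beta> = bpat t N0"
  have bp: "bpat (cube_face i e t) N = ins \<beta> (i - 1) e" using bpat_face[OF a(4) a(1) a(2)] N0 \<beta>_def by simp
  have i0: "i - 1 \<le> N0" using a N0 by auto
  have "cnt (ins \<beta> (i - 1) e) (Suc N0) = Suc (cnt \<beta> N0)" using i0 by (rule cnt_ins)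
  moreover have "dpat d (ins \<beta> (i - 1) e) (Suc N0) (Suc N0) x = dpat d \<beta> N0 N0 (d (Suc N0) (Suc (i - 1)) e x)"
    using i0 a N0 by (intro dpat_ins) auto
  moreover have "strip (ins \<beta> (i - 1) e) (Suc N0) (cube_face i e t) = strip \<beta> N0 (rmc (i - 1) (cube_face i e t))"
    using i0 by (rule strip_ins)
  moreover have "rmc (i - 1) (cube_face i e t) = t" using rmc_face[of "i - 1" e t] a by simp
  ultimately show ?thesis using bp a N0 by (simp add: nf_def \<beta>_def del: dpat.simps strip.simps cnt.simps)
qed

lemma SYM_nf: "(P, Q) \<in> SYM \<Longrightarrow> nf P = nf Q"
proof (induction rule: rtrancl_induct)
  case (step y z)
  then show ?case using nf_step[simplified] by (auto simp: cgen_def)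
qed simp

lemma SYM_TOP: "(P, Q) \<in> SYM \<Longrightarrow> P \<in> TOP \<Longrightarrow> Q \<in> TOP"
proof (induction rule: rtrancl_induct)
  case (step y z)
  then show ?case using d_mem[simplified] cube_face_in_cube[simplified] by (auto simp: cgen_def topspace_cdisj)
qed simp

lemma crel_iff: "(P, Q) \<in> crel Cs d \<longleftrightarrow> P \<in> TOP \<and> Q \<in> TOP \<and> nf P = nf Q"
proof
  assume "(P, Q) \<in> crel Cs d"
  then show "P \<in> TOP \<and> Q \<in> TOP \<and> nf P = nf Q" by (auto simp: crel_def intro: SYM_nf)
next
  assume a: "P \<in> TOP \<and> Q \<in> TOP \<and> nf P = nf Q"
  then have "(P, nf P) \<in> SYM" "(nf Q, Q) \<in> SYM" using P_nf SYM_sym by blast+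
  then have "(P, Q) \<in> SYM" using a by (metis rtrancl_trans)
  then show "(P, Q) \<in> crel Cs d" using a by (simp add: crel_def)
qed

lemma nf_interior: "P \<in> TOP \<Longrightarrow> interior_pt (nf P)"
proof -
  assume P: "P \<in> TOP"
  obtain M x u where Pe: "P = ((M, x), u)" by (metis prod.collapse)
  have u: "u \<in> cube M" using P Pe by (auto simp: topspace_cdisj)
  have "0 < strip (bpat u M) M u j \<and> strip (bpat u M) M u j < 1" if jl: "j < M - cnt (bpat u M) M" for j
  proof -
    obtain p where "p < M" "bpat u M p = None" "strip (bpat u M) M u j = u p"
      using strip_val_lo[OF jl, of u] by blast
    then show ?thesis using u by (auto simp: bpat_def cube_def split: if_splits)
  qed
  then show ?thesis by (simp add: Pe nf_def interior_pt_def)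
qed

lemma nf_of_interior: "interior_pt P \<Longrightarrow> nf P = P"
proof -
  assume P: "interior_pt P"
  obtain M x u where Pe: "P = ((M, x), u)" by (metis prod.collapse)
  have "\<And>p. p < M \<Longrightarrow> bpat u M p = None" using P Pe by (auto simp: bpat_def interior_pt_def)
  then show ?thesis using none_below[of M "bpat u M"] by (simp add: Pe nf_def)
qed

lemma nf_nf: "P \<in> TOP \<Longrightarrow> nf (nf P) = nf P"
  using nf_of_interior nf_interior by blast

end

context cset begin

definition cls :: "((nat \<times> 'a) \<times> (nat \<Rightarrow> real)) \<Rightarrow> ((nat \<times> 'a) \<times> (nat \<Rightarrow> real)) set" where
  "cls P = crel Cs d `` {P}"

abbreviation "CL \<equiv> TOP // crel Cs d"

lemma cls_iff: "P \<in> TOP \<Longrightarrow> Q \<in> cls P \<longleftrightarrow> Q \<in> TOP \<and> nf Q = nf P"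
  by (auto simp: cls_def crel_iff)

lemma cls_self: "P \<in> TOP \<Longrightarrow> P \<in> cls P"
  by (simp add: cls_iff)

lemma cls_eq: "P \<in> TOP \<Longrightarrow> Q \<in> TOP \<Longrightarrow> cls P = cls Q \<longleftrightarrow> nf P = nf Q"
proof
  assume "P \<in> TOP" "Q \<in> TOP" "cls P = cls Q"
  then show "nf P = nf Q" using cls_self[of P] cls_iff[of Q P] by auto
next
  assume "P \<in> TOP" "Q \<in> TOP" "nf P = nf Q"
  then show "cls P = cls Q" by (auto simp: cls_iff)
qed

lemma CL_eq: "CL = cls ` TOP"
  by (auto simp: quotient_def cls_def)

lemma cls_sub: "P \<in> TOP \<Longrightarrow> cls P \<subseteq> TOP"
  by (auto simp: cls_iff)

lemma mem_cls_eq: "P \<in> TOP \<Longrightarrow> Q \<in> cls P \<Longrightarrow> cls Q = cls P"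
  by (simp add: cls_eq cls_iff)

lemma Union_CL: "\<Union> CL = TOP"
  unfolding CL_eq using cls_self cls_sub by blast

lemma CL_disj: "A \<in> CL \<Longrightarrow> B \<in> CL \<Longrightarrow> Q \<in> A \<Longrightarrow> Q \<in> B \<Longrightarrow> A = B"
proof -
  assume a: "A \<in> CL" "B \<in> CL" "Q \<in> A" "Q \<in> B"
  then obtain P1 P2 where "P1 \<in> TOP" "P2 \<in> TOP" "A = cls P1" "B = cls P2" by (auto simp: CL_eq)
  then show ?thesis using a mem_cls_eq by metis
qed

lemma in_CL_cls: "A \<in> CL \<Longrightarrow> Q \<in> A \<Longrightarrow> A = cls Q"
proof -
  assume a: "A \<in> CL" "Q \<in> A"
  then obtain P1 where "P1 \<in> TOP" "A = cls P1" by (auto simp: CL_eq)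
  then show ?thesis using a mem_cls_eq by metis
qed

lemma qtop_Int: "S \<subseteq> CL \<Longrightarrow> T \<subseteq> CL \<Longrightarrow> \<Union>(S \<inter> T) = \<Union>S \<inter> \<Union>T"
proof -
  assume a: "S \<subseteq> CL" "T \<subseteq> CL"
  have 1: "\<Union> S \<inter> \<Union> T \<subseteq> \<Union> (S \<inter> T)"
    proof
      fix x assume "x \<in> \<Union> S \<inter> \<Union> T"
      then obtain A B where "A \<in> S" "B \<in> T" "x \<in> A" "x \<in> B" by auto
      then have "A = B" using a CL_disj by blast
      then show "x \<in> \<Union> (S \<inter> T)" using \<open>A \<in> S\<close> \<open>B \<in> T\<close> \<open>x \<in> A\<close> by auto
    qed
  then show ?thesis by auto
qed

lemma is_qtop: "istopology (\<lambda>U. U \<subseteq> CL \<and> openin (cdisj Cs) (\<Union>U))"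
  unfolding istopology_def
proof (intro conjI allI impI)
  fix S T assume a: "S \<subseteq> CL \<and> openin (cdisj Cs) (\<Union> S)" "T \<subseteq> CL \<and> openin (cdisj Cs) (\<Union> T)"
  then show "S \<inter> T \<subseteq> CL" by auto
  show "openin (cdisj Cs) (\<Union> (S \<inter> T))" using a qtop_Int by auto
next
  fix K assume a: "\<forall>S\<in>K. S \<subseteq> CL \<and> openin (cdisj Cs) (\<Union> S)"
  have "\<Union>(\<Union>K) = \<Union>((\<lambda>S. \<Union>S) ` K)" by auto
  then show "\<Union> K \<subseteq> CL" "openin (cdisj Cs) (\<Union> (\<Union> K))" using a by auto
qed

lemma openin_real: "openin (realisation Cs d) U \<longleftrightarrow> U \<subseteq> CL \<and> openin (cdisj Cs) (\<Union>U)"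
  unfolding realisation_def quotient_top_def using is_qtop by simp

lemma topspace_real: "topspace (realisation Cs d) = CL"
proof -
  have "openin (realisation Cs d) CL" using Union_CL by (simp add: openin_real)
  moreover have "\<And>U. openin (realisation Cs d) U \<Longrightarrow> U \<subseteq> CL" by (simp add: openin_real)
  ultimately show ?thesis by (metis openin_subset openin_topspace subset_antisym)
qed

lemma Union_diff: "F \<subseteq> CL \<Longrightarrow> \<Union>(CL - F) = TOP - \<Union>F"
proof
  assume F: "F \<subseteq> CL"
  show "\<Union> (CL - F) \<subseteq> TOP - \<Union> F"
  proof
    fix x assume "x \<in> \<Union> (CL - F)"
    then obtain A where A: "A \<in> CL" "A \<notin> F" "x \<in> A" by auto
    have "x \<notin> \<Union>F" using A F CL_disj by blast
    then show "x \<in> TOP - \<Union> F" using A Union_CL by auto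
  qed
  show "TOP - \<Union> F \<subseteq> \<Union> (CL - F)" using Union_CL by auto
qed

lemma closedin_real: "closedin (realisation Cs d) F \<longleftrightarrow> F \<subseteq> CL \<and> closedin (cdisj Cs) (\<Union>F)"
proof -
  have "closedin (realisation Cs d) F \<longleftrightarrow> F \<subseteq> CL \<and> openin (cdisj Cs) (\<Union>(CL - F))"
    by (auto simp: closedin_def topspace_real openin_real)
  also have "\<dots> \<longleftrightarrow> F \<subseteq> CL \<and> openin (cdisj Cs) (TOP - \<Union>F)"
    using Union_diff by auto
  also have "\<dots> \<longleftrightarrow> F \<subseteq> CL \<and> closedin (cdisj Cs) (\<Union>F)"
    using Union_CL by (auto simp: closedin_def)
  finally show ?thesis .
qed

end

locale cset2 = C: cset Cs d + D: cset Ds d'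
  for Cs :: "nat \<Rightarrow> 'a set" and d and Ds :: "nat \<Rightarrow> 'b set" and d'
begin

context
  fixes g :: "((nat \<times> 'a) \<times> (nat \<Rightarrow> real)) \<Rightarrow> ((nat \<times> 'b) \<times> (nat \<Rightarrow> real))"
  assumes gT: "\<And>P. P \<in> C.TOP \<Longrightarrow> g P \<in> D.TOP"
    and gresp: "\<And>P Q. (P, Q) \<in> cgen Cs d \<Longrightarrow> D.nf (g P) = D.nf (g Q)"
begin

lemma g_SYM: "(P, Q) \<in> C.SYM \<Longrightarrow> D.nf (g P) = D.nf (g Q)"
proof (induction rule: rtrancl_induct)
  case (step y z)
  then show ?case using gresp[of y z] gresp[of z y] by auto
qed simp

lemma g_crel: "(P, Q) \<in> crel Cs d \<Longrightarrow> D.nf (g P) = D.nf (g Q)"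
  by (auto simp: crel_def intro: g_SYM)

lemma lift_cls: "P \<in> C.TOP \<Longrightarrow> liftmap (crel Ds d') g (C.cls P) = D.cls (g P)"
proof -
  assume P: "P \<in> C.TOP"
  have "D.nf (g Q) = D.nf (g P)" if "Q \<in> C.cls P" for Q
    using that P g_crel[of P Q] by (auto simp: C.cls_def)
  moreover have "g Q \<in> D.TOP" if "Q \<in> C.cls P" for Q using that P C.cls_sub gT by blast
  ultimately show ?thesis
    using P C.cls_self gT
  proof (intro set_eqI iffI)
    fix y assume "y \<in> liftmap (crel Ds d') g (C.cls P)"
    then obtain Q where Q: "Q \<in> C.cls P" "(g Q, y) \<in> crel Ds d'" by (auto simp: liftmap_def)
    then show "y \<in> D.cls (g P)" using \<open>\<And>Q. Q \<in> C.cls P \<Longrightarrow> D.nf (g Q) = D.nf (g P)\<close>[OF Q(1)] P gT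
      by (simp add: D.cls_iff D.crel_iff)
  next
    fix y assume "y \<in> D.cls (g P)"
    then have "(g P, y) \<in> crel Ds d'" by (simp add: D.cls_def)
    then show "y \<in> liftmap (crel Ds d') g (C.cls P)" using C.cls_self[OF P] by (auto simp: liftmap_def)
  qed
qed

lemma lift_cont:
  assumes gc: "continuous_map (cdisj Cs) (cdisj Ds) g"
  shows "continuous_map (realisation Cs d) (realisation Ds d') (liftmap (crel Ds d') g)"
  unfolding continuous_map_def
proof (intro conjI allI impI)
  show "liftmap (crel Ds d') g \<in> topspace (realisation Cs d) \<rightarrow> topspace (realisation Ds d')"
    using lift_cls gT by (auto simp: C.topspace_real D.topspace_real C.CL_eq D.CL_eq)
next
  fix U assume U: "openin (realisation Ds d') U"
  then have U': "U \<subseteq> D.CL" "openin (cdisj Ds) (\<Union>U)" by (auto simp: D.openin_real)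
  have eq: "\<Union>{A \<in> topspace (realisation Cs d). liftmap (crel Ds d') g A \<in> U} = {P \<in> C.TOP. g P \<in> \<Union>U}"
  proof
    show "\<Union> {A \<in> topspace (realisation Cs d). liftmap (crel Ds d') g A \<in> U} \<subseteq> {P \<in> C.TOP. g P \<in> \<Union> U}"
    proof
      fix x assume "x \<in> \<Union> {A \<in> topspace (realisation Cs d). liftmap (crel Ds d') g A \<in> U}"
      then obtain A where A: "A \<in> C.CL" "liftmap (crel Ds d') g A \<in> U" "x \<in> A" by (auto simp: C.topspace_real)
      then have x: "x \<in> C.TOP" "A = C.cls x" using C.Union_CL C.in_CL_cls by auto
      then have "D.cls (g x) \<in> U" using A lift_cls by auto
      moreover have "g x \<in> D.cls (g x)" using x D.cls_self gT by auto
      ultimately show "x \<in> {P \<in> C.TOP. g P \<in> \<Union> U}" using x by auto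
    qed
    show "{P \<in> C.TOP. g P \<in> \<Union> U} \<subseteq> \<Union> {A \<in> topspace (realisation Cs d). liftmap (crel Ds d') g A \<in> U}"
    proof
      fix x assume x: "x \<in> {P \<in> C.TOP. g P \<in> \<Union> U}"
      then obtain B where B: "B \<in> U" "g x \<in> B" by auto
      then have "B = D.cls (g x)" using U' D.in_CL_cls[of B "g x"] by blast
      then have "liftmap (crel Ds d') g (C.cls x) \<in> U" using B x lift_cls by auto
      moreover have "C.cls x \<in> topspace (realisation Cs d)" using x by (auto simp: C.topspace_real C.CL_eq)
      ultimately show "x \<in> \<Union> {A \<in> topspace (realisation Cs d). liftmap (crel Ds d') g A \<in> U}"
        using x C.cls_self[of x] by blast
    qed
  qed
  have "openin (cdisj Cs) {P \<in> C.TOP. g P \<in> \<Union>U}"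
    using gc U'(2) unfolding continuous_map_def by blast
  then show "openin (realisation Cs d) {A \<in> topspace (realisation Cs d). liftmap (crel Ds d') g A \<in> U}"
    using eq by (auto simp: C.openin_real C.topspace_real)
qed

end
end

declare dpat.simps(2)[simp del] emb.simps(2)[simp del] cnt.simps(2)[simp del] strip.simps(2)[simp del]

context cset begin

definition nr :: "nat \<Rightarrow> 'a \<Rightarrow> (nat \<Rightarrow> real) \<Rightarrow> real \<Rightarrow> nat \<Rightarrow> 'a \<Rightarrow> (nat \<Rightarrow> real) \<Rightarrow> bool" where
  "nr D0 \<sigma> u \<epsilon> m \<tau> v \<longleftrightarrow> (\<exists>\<beta>. (\<forall>p\<ge>m. \<beta> p = None) \<and> m - cnt \<beta> m = D0 \<and> dpat d \<beta> m m \<tau> = \<sigma> \<and>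
      (\<forall>p<m. \<bar>v p - emb \<beta> m u p\<bar> < \<epsilon>))"

definition gd :: "nat \<Rightarrow> (nat \<Rightarrow> real) \<Rightarrow> real \<Rightarrow> bool" where
  "gd D0 u \<epsilon> \<longleftrightarrow> 0 < \<epsilon> \<and> \<epsilon> \<le> 1/2 \<and> (\<forall>j<D0. \<epsilon> \<le> u j \<and> \<epsilon> \<le> 1 - u j)"

lemma nr_fwd:
  assumes a: "1 \<le> i" "i \<le> N" "x \<in> Cs N" "t \<in> cube (N - 1)" "0 < \<epsilon>"
    and n: "nr D0 \<sigma> u \<epsilon> (N - 1) (d N i e x) t"
  shows "nr D0 \<sigma> u \<epsilon> N x (cube_face i e t)"
proof -
  obtain N0 where N0: "N = Suc N0" using a by (cases N) auto
  obtain \<beta> where b: "\<forall>p\<ge>N0. \<beta> p = None" "N0 - cnt \<beta> N0 = D0" "dpat d \<beta> N0 N0 (d N i e x) = \<sigma>"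
    "\<forall>p<N0. \<bar>t p - emb \<beta> N0 u p\<bar> < \<epsilon>" using n N0 by (auto simp: nr_def)
  have q: "i - 1 \<le> N0" using a N0 by auto
  define \<beta>' where "\<beta>' = ins \<beta> (i - 1) e"
  have 1: "cnt \<beta>' (Suc N0) = Suc (cnt \<beta> N0)" using q by (simp add: \<beta>'_def cnt_ins)
  have 2: "dpat d \<beta>' (Suc N0) (Suc N0) x = dpat d \<beta> N0 N0 (d (Suc N0) (Suc (i - 1)) e x)"
    using q a N0 by (simp add: \<beta>'_def dpat_ins)
  have 3: "emb \<beta>' (Suc N0) u = cube_face (Suc (i - 1)) e (emb \<beta> N0 u)"
    using q by (simp add: \<beta>'_def emb_ins)
  have 4: "\<forall>p\<ge>Suc N0. \<beta>' p = None" using b q by (auto simp: \<beta>'_def ins_def)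
  have 5: "\<bar>cube_face i e t p - cube_face i e (emb \<beta> N0 u) p\<bar> < \<epsilon>" if "p < Suc N0" for p
    using that b(4) a(5) q by (auto simp: cube_face_apply)
  show ?thesis unfolding nr_def N0
    using 1 2 3 4 5 b a N0 by (intro exI[of _ \<beta>']) (auto simp del: dpat.simps cnt.simps emb.simps)
qed

lemma nr_bwd:
  assumes a: "1 \<le> i" "i \<le> N" "x \<in> Cs N" "t \<in> cube (N - 1)" and g: "gd D0 u \<epsilon>"
    and n: "nr D0 \<sigma> u \<epsilon> N x (cube_face i e t)"
  shows "nr D0 \<sigma> u \<epsilon> (N - 1) (d N i e x) t"
proof -
  obtain N0 where N0: "N = Suc N0" using a by (cases N) auto
  obtain \<beta>' where b: "\<forall>p\<ge>N. \<beta>' p = None" "N - cnt \<beta>' N = D0" "dpat d \<beta>' N N x = \<sigma>"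
    "\<forall>p<N. \<bar>cube_face i e t p - emb \<beta>' N u p\<bar> < \<epsilon>" using n by (auto simp: nr_def)
  define q where "q = i - 1"
  have qN: "q < N" "q \<le> N0" using a N0 by (auto simp: q_def)
  have cq: "\<bar>ev e - emb \<beta>' N u q\<bar> < \<epsilon>" using b(4) qN a by (auto simp: cube_face_apply q_def)
  have bq: "\<beta>' q = Some e"
  proof (cases "\<beta>' q")
    case None
    then have j: "q - cnt \<beta>' q < D0" using rank_lt[of q N \<beta>', OF qN(1) None] b(2) by simp
    have "emb \<beta>' N u q = u (q - cnt \<beta>' q)" using emb_val[of \<beta>' N u q] qN None by simp
    then show ?thesis using cq g j unfolding gd_def by (cases e) (auto simp: ev_def)
  next
    case (Some e')
    then have "emb \<beta>' N u q = ev e'" using emb_val[of \<beta>' N u q] qN by simp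
    then show ?thesis using cq g Some unfolding gd_def by (cases e; cases e') (auto simp: ev_def)
  qed
  define \<beta> where "\<beta> = (\<lambda>p. if p < q then \<beta>' p else \<beta>' (Suc p))"
  have bb: "\<beta>' = ins \<beta> q e" using bq by (auto simp: \<beta>_def ins_def fun_eq_iff)
  have 1: "cnt \<beta>' (Suc N0) = Suc (cnt \<beta> N0)" using qN by (simp add: bb cnt_ins)
  have 2: "dpat d \<beta>' (Suc N0) (Suc N0) x = dpat d \<beta> N0 N0 (d (Suc N0) (Suc q) e x)"
    using qN a N0 by (simp add: bb dpat_ins)
  have 3: "emb \<beta>' (Suc N0) u = cube_face (Suc q) e (emb \<beta> N0 u)"
    using qN by (simp add: bb emb_ins)
  have 4: "\<forall>p\<ge>N0. \<beta> p = None" using b qN N0 by (auto simp: \<beta>_def)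
  have Sq: "Suc q = i" using a by (simp add: q_def)
  have 5: "\<bar>t p - emb \<beta> N0 u p\<bar> < \<epsilon>" if "p < N0" for p
  proof -
    define r where "r = (if p < q then p else Suc p)"
    have "r < N" using that N0 by (auto simp: r_def)
    then have "\<bar>cube_face i e t r - cube_face i e (emb \<beta> N0 u) r\<bar> < \<epsilon>" using b(4) 3 N0 Sq by simp
    then show ?thesis by (auto simp: r_def cube_face_apply q_def split: if_splits)
  qed
  show ?thesis unfolding nr_def
    using 1 2 3 4 5 b N0 Sq by (intro exI[of _ \<beta>]) (auto simp del: dpat.simps cnt.simps emb.simps)
qed

definition near :: "((nat \<times> 'a) \<times> (nat \<Rightarrow> real)) \<Rightarrow> real \<Rightarrow> ((nat \<times> 'a) \<times> (nat \<Rightarrow> real)) \<Rightarrow> bool" where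
  "near A \<epsilon> Q = nr (fst (fst A)) (snd (fst A)) (snd A) \<epsilon> (fst (fst Q)) (snd (fst Q)) (snd Q)"

lemma near_SYM:
  assumes g: "gd (fst (fst A)) (snd A) \<epsilon>"
  shows "(P, Q) \<in> SYM \<Longrightarrow> near A \<epsilon> P = near A \<epsilon> Q"
proof (induction rule: rtrancl_induct)
  case (step y z)
  have gg: "0 < \<epsilon>" using g by (simp add: gd_def)
  from step(2) have "near A \<epsilon> y = near A \<epsilon> z"
  proof
    assume "(y, z) \<in> cgen Cs d"
    then obtain n i e x t where yz: "y = ((n - 1, d n i e x), t)" "z = ((n, x), cube_face i e t)"
      and h: "1 \<le> i" "i \<le> n" "x \<in> Cs n" "t \<in> cube (n - 1)" by (auto simp: cgen_def)
    show ?thesis unfolding near_def yz fst_conv snd_conv using nr_fwd[OF h gg] nr_bwd[OF h g] by blast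
  next
    assume "(y, z) \<in> (cgen Cs d)\<inverse>"
    then obtain n i e x t where yz: "z = ((n - 1, d n i e x), t)" "y = ((n, x), cube_face i e t)"
      and h: "1 \<le> i" "i \<le> n" "x \<in> Cs n" "t \<in> cube (n - 1)" by (auto simp: cgen_def)
    show ?thesis unfolding near_def yz fst_conv snd_conv using nr_fwd[OF h gg] nr_bwd[OF h g] by blast
  qed
  then show ?case using step by simp
qed simp

definition NB :: "((nat \<times> 'a) \<times> (nat \<Rightarrow> real)) \<Rightarrow> real \<Rightarrow> ((nat \<times> 'a) \<times> (nat \<Rightarrow> real)) set set" where
  "NB A \<epsilon> = {X \<in> CL. \<exists>Q\<in>X. near A \<epsilon> Q}"

lemma near_cls: "gd (fst (fst A)) (snd A) \<epsilon> \<Longrightarrow> P \<in> TOP \<Longrightarrow> Q \<in> cls P \<Longrightarrow> near A \<epsilon> Q = near A \<epsilon> P"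
proof -
  assume g: "gd (fst (fst A)) (snd A) \<epsilon>" and Q: "Q \<in> cls P"
  have "(P, Q) \<in> crel Cs d" using Q by (simp add: cls_def)
  then have "(P, Q) \<in> SYM" by (simp add: crel_def)
  from near_SYM[OF g this] show ?thesis by simp
qed

lemma Union_NB: "gd (fst (fst A)) (snd A) \<epsilon> \<Longrightarrow> \<Union>(NB A \<epsilon>) = {Q \<in> TOP. near A \<epsilon> Q}"
proof
  assume g: "gd (fst (fst A)) (snd A) \<epsilon>"
  show "\<Union> (NB A \<epsilon>) \<subseteq> {Q \<in> TOP. near A \<epsilon> Q}"
  proof
    fix Q assume "Q \<in> \<Union> (NB A \<epsilon>)"
    then obtain X Q' where X: "X \<in> CL" "Q \<in> X" "Q' \<in> X" "near A \<epsilon> Q'" by (auto simp: NB_def)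
    have XQ: "X = cls Q" using in_CL_cls[OF X(1) X(2)] .
    have QT: "Q \<in> TOP" using X(1,2) Union_CL by blast
    have "near A \<epsilon> Q' = near A \<epsilon> Q" using near_cls[OF g QT] X(3) XQ by blast
    then show "Q \<in> {Q \<in> TOP. near A \<epsilon> Q}" using QT X(4) by blast
  qed
  show "{Q \<in> TOP. near A \<epsilon> Q} \<subseteq> \<Union> (NB A \<epsilon>)"
  proof
    fix Q assume Q: "Q \<in> {Q \<in> TOP. near A \<epsilon> Q}"
    then have "cls Q \<in> CL" by (auto simp: CL_eq)
    then have "cls Q \<in> NB A \<epsilon>" using cls_self[of Q] Q unfolding NB_def by blast
    then show "Q \<in> \<Union> (NB A \<epsilon>)" using cls_self[of Q] Q by blast
  qed
qed

lemma open_nr: "open {v::nat\<Rightarrow>real. \<forall>p<(m::nat). \<bar>v p - c p\<bar> < (\<epsilon>::real)}"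
proof -
  have "open {v. \<forall>p\<in>{..<m}. v (id p) \<in> ball (c p) \<epsilon>}"
    by (rule product_topology_basis') auto
  moreover have "{v. \<forall>p\<in>{..<m}. v (id p) \<in> ball (c p) \<epsilon>} = {v. \<forall>p<m. \<bar>v p - c p\<bar> < \<epsilon>}"
    by (auto simp: dist_real_def abs_minus_commute)
  ultimately show ?thesis by simp
qed

lemma openin_NB: "gd (fst (fst A)) (snd A) \<epsilon> \<Longrightarrow> openin (realisation Cs d) (NB A \<epsilon>)"
proof -
  assume g: "gd (fst (fst A)) (snd A) \<epsilon>"
  have "openin (cube_top m) {v. ((m, \<tau>), v) \<in> {Q \<in> TOP. near A \<epsilon> Q}}" for m \<tau>
  proof -
    define Bs where "Bs = {\<beta>. (\<forall>p\<ge>m. \<beta> p = None) \<and> m - cnt \<beta> m = fst (fst A) \<and> dpat d \<beta> m m \<tau> = snd (fst A)}"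
    have "{v. ((m, \<tau>), v) \<in> {Q \<in> TOP. near A \<epsilon> Q}} \<subseteq> cube m \<inter> (\<Union>\<beta>\<in>Bs. {v. \<forall>p<m. \<bar>v p - emb \<beta> m (snd A) p\<bar> < \<epsilon>})"
      by (auto simp: near_def nr_def Bs_def TOP_iff)
    moreover have "\<tau> \<in> Cs m \<Longrightarrow> cube m \<inter> (\<Union>\<beta>\<in>Bs. {v. \<forall>p<m. \<bar>v p - emb \<beta> m (snd A) p\<bar> < \<epsilon>}) \<subseteq> {v. ((m, \<tau>), v) \<in> {Q \<in> TOP. near A \<epsilon> Q}}"
      by (auto simp: near_def nr_def Bs_def TOP_iff)
    moreover have "open (\<Union>\<beta>\<in>Bs. {v. \<forall>p<m. \<bar>v p - emb \<beta> m (snd A) p\<bar> < \<epsilon>})"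
      using open_nr by blast
    ultimately show ?thesis
    proof (cases "\<tau> \<in> Cs m")
      case True
      assume s1: "{v. ((m, \<tau>), v) \<in> {Q \<in> TOP. near A \<epsilon> Q}} \<subseteq> cube m \<inter> (\<Union>\<beta>\<in>Bs. {v. \<forall>p<m. \<bar>v p - emb \<beta> m (snd A) p\<bar> < \<epsilon>})"
        and s2: "\<tau> \<in> Cs m \<Longrightarrow> cube m \<inter> (\<Union>\<beta>\<in>Bs. {v. \<forall>p<m. \<bar>v p - emb \<beta> m (snd A) p\<bar> < \<epsilon>}) \<subseteq> {v. ((m, \<tau>), v) \<in> {Q \<in> TOP. near A \<epsilon> Q}}"
        and o: "open (\<Union>\<beta>\<in>Bs. {v. \<forall>p<m. \<bar>v p - emb \<beta> m (snd A) p\<bar> < \<epsilon>})"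
      have "{v. ((m, \<tau>), v) \<in> {Q \<in> TOP. near A \<epsilon> Q}} = cube m \<inter> (\<Union>\<beta>\<in>Bs. {v. \<forall>p<m. \<bar>v p - emb \<beta> m (snd A) p\<bar> < \<epsilon>})"
        using s1 s2[OF True] by (rule subset_antisym)
      then show ?thesis using o by (simp add: cube_top_def openin_open_Int)
    next
      case False
      then have e: "{v. ((m, \<tau>), v) \<in> {Q \<in> TOP. near A \<epsilon> Q}} = {}" by (simp add: TOP_iff)
      show ?thesis by (subst e) (rule openin_empty)
    qed
  qed
  then have op: "openin (cube_top m) {v. ((m, \<tau>), v) \<in> {Q \<in> TOP. near A \<epsilon> Q}}" for m \<tau> .
  have "openin (sum_topology (\<lambda>(n, x). cube_top n) (Sigma UNIV Cs)) {Q \<in> TOP. near A \<epsilon> Q}"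
    unfolding openin_sum_topology
  proof (intro conjI ballI)
    show "{Q \<in> TOP. near A \<epsilon> Q} \<subseteq> Sigma (Sigma UNIV Cs) (topspace \<circ> (\<lambda>(n, x). cube_top n))"
      by (auto simp: topspace_cdisj)
    fix i assume "i \<in> Sigma UNIV Cs"
    obtain m \<tau> where i: "i = (m, \<tau>)" by (cases i)
    show "openin ((\<lambda>(n, x). cube_top n) i) {x. (i, x) \<in> {Q \<in> TOP. near A \<epsilon> Q}}"
      using op[of m \<tau>] by (simp add: i)
  qed
  then have "openin (cdisj Cs) {Q \<in> TOP. near A \<epsilon> Q}" by (simp add: cdisj_def)
  moreover have "NB A \<epsilon> \<subseteq> CL" by (auto simp: NB_def)
  ultimately show ?thesis using Union_NB[OF g] by (simp add: openin_real)
qed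

lemma self_NB: "A \<in> TOP \<Longrightarrow> 0 < \<epsilon> \<Longrightarrow> cls A \<in> NB A \<epsilon>"
proof -
  assume A: "A \<in> TOP" "0 < \<epsilon>"
  have "near A \<epsilon> A" unfolding near_def nr_def
    using A by (intro exI[of _ "\<lambda>_. None"]) (simp add: none_below)
  moreover have "cls A \<in> CL" using A by (auto simp: CL_eq)
  ultimately show ?thesis using A cls_self[of A] unfolding NB_def by blast
qed

end

context cset begin

lemma gd_mono: "gd D u e' \<Longrightarrow> 0 < e \<Longrightarrow> e \<le> e' \<Longrightarrow> gd D u e"
  by (auto simp: gd_def)

lemma sep:
  assumes g1: "gd D1 u1 (2 * \<epsilon>)" and g2: "gd D2 u2 (2 * \<epsilon>)"
    and n1: "nr D1 \<sigma>1 u1 \<epsilon> m \<tau> v" and n2: "nr D2 \<sigma>2 u2 \<epsilon> m \<tau> v"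
  shows "D1 = D2 \<and> \<sigma>1 = \<sigma>2 \<and> (\<forall>j<D1. \<bar>u1 j - u2 j\<bar> < 2 * \<epsilon>)"
proof -
  obtain \<beta>1 where b1: "\<forall>p\<ge>m. \<beta>1 p = None" "m - cnt \<beta>1 m = D1" "dpat d \<beta>1 m m \<tau> = \<sigma>1"
    "\<forall>p<m. \<bar>v p - emb \<beta>1 m u1 p\<bar> < \<epsilon>" using n1 by (auto simp: nr_def)
  obtain \<beta>2 where b2: "\<forall>p\<ge>m. \<beta>2 p = None" "m - cnt \<beta>2 m = D2" "dpat d \<beta>2 m m \<tau> = \<sigma>2"
    "\<forall>p<m. \<bar>v p - emb \<beta>2 m u2 p\<bar> < \<epsilon>" using n2 by (auto simp: nr_def)
  have c: "\<bar>emb \<beta>1 m u1 p - emb \<beta>2 m u2 p\<bar> < 2 * \<epsilon>" if "p < m" for p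
    using b1(4) b2(4) that by (smt (verit))
  have eq: "\<beta>1 = \<beta>2"
  proof
    fix p
    show "\<beta>1 p = \<beta>2 p"
    proof (cases "p < m")
      case False then show ?thesis using b1 b2 by auto
    next
      case True
      have e1: "emb \<beta>1 m u1 p = (case \<beta>1 p of Some e \<Rightarrow> ev e | None \<Rightarrow> u1 (p - cnt \<beta>1 p))"
        using emb_val[of \<beta>1 m u1 p] True by simp
      have e2: "emb \<beta>2 m u2 p = (case \<beta>2 p of Some e \<Rightarrow> ev e | None \<Rightarrow> u2 (p - cnt \<beta>2 p))"
        using emb_val[of \<beta>2 m u2 p] True by simp
      have cp: "\<bar>emb \<beta>1 m u1 p - emb \<beta>2 m u2 p\<bar> < 2 * \<epsilon>" using c True by blast
      show ?thesis
      proof (cases "\<beta>1 p")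
        case None
        then have j1: "p - cnt \<beta>1 p < D1" using rank_lt[of p m \<beta>1] True b1(2) by simp
        show ?thesis
        proof (cases "\<beta>2 p")
          case None2: None then show ?thesis using None by simp
        next
          case (Some e)
          then show ?thesis using None cp e1 e2 g1 j1 unfolding gd_def by (cases e) (auto simp: ev_def)
        qed
      next
        case (Some e)
        show ?thesis
        proof (cases "\<beta>2 p")
          case None
          then have j2: "p - cnt \<beta>2 p < D2" using rank_lt[of p m \<beta>2] True b2(2) by simp
          then show ?thesis using None Some cp e1 e2 g2 j2 unfolding gd_def by (cases e) (auto simp: ev_def)
        next
          case (Some e')
          then show ?thesis using \<open>\<beta>1 p = Some e\<close> cp e1 e2 g1 unfolding gd_def
            by (cases e; cases e') (auto simp: ev_def)
        qed
      qed
    qed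
  qed
  have D: "D1 = D2" "\<sigma>1 = \<sigma>2" using eq b1 b2 by auto
  have "\<bar>u1 j - u2 j\<bar> < 2 * \<epsilon>" if j: "j < D1" for j
  proof -
    obtain p where p: "p < m" "\<beta>1 p = None" "p - cnt \<beta>1 p = j" using rank_surj[of j m \<beta>1] j b1(2) by auto
    have "emb \<beta>1 m u1 p = u1 j" using emb_val[of \<beta>1 m u1 p] p by simp
    moreover have "emb \<beta>2 m u2 p = u2 j" using emb_val[of \<beta>2 m u2 p] p eq by simp
    ultimately show ?thesis using c[OF p(1)] by simp
  qed
  then show ?thesis using D by blast
qed

lemma exists_eps:
  assumes i1: "\<forall>p<D1. 0 < u1 p \<and> u1 p < 1" and i2: "\<forall>p<D2. 0 < u2 p \<and> u2 p < 1"
    and ne: "D1 = D2 \<and> \<sigma>1 = \<sigma>2 \<Longrightarrow> \<exists>j<D1. u1 j \<noteq> u2 j"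
  shows "\<exists>\<epsilon>. gd D1 u1 (2 * \<epsilon>) \<and> gd D2 u2 (2 * \<epsilon>) \<and>
     ((D1 = D2 \<and> \<sigma>1 = \<sigma>2) \<longrightarrow> (\<exists>j<D1. 2 * \<epsilon> \<le> \<bar>u1 j - u2 j\<bar>))"
proof -
  define G where "G = (if D1 = D2 \<and> \<sigma>1 = \<sigma>2 then {\<bar>u1 (SOME j. j < D1 \<and> u1 j \<noteq> u2 j) - u2 (SOME j. j < D1 \<and> u1 j \<noteq> u2 j)\<bar>} else {})"
  define F where "F = {1/2} \<union> u1 ` {..<D1} \<union> (\<lambda>j. 1 - u1 j) ` {..<D1} \<union> u2 ` {..<D2} \<union> (\<lambda>j. 1 - u2 j) ` {..<D2} \<union> G"
  have fF: "finite F" "F \<noteq> {}" by (auto simp: F_def G_def)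
  have sj: "D1 = D2 \<and> \<sigma>1 = \<sigma>2 \<Longrightarrow> (SOME j. j < D1 \<and> u1 j \<noteq> u2 j) < D1 \<and> u1 (SOME j. j < D1 \<and> u1 j \<noteq> u2 j) \<noteq> u2 (SOME j. j < D1 \<and> u1 j \<noteq> u2 j)"
    using ne by (rule someI_ex)
  have pos: "\<forall>x\<in>F. 0 < x" using i1 i2 sj by (auto simp: F_def G_def)
  define \<epsilon> where "\<epsilon> = Min F / 2"
  have e2: "2 * \<epsilon> = Min F" by (simp add: \<epsilon>_def)
  have le: "\<And>x. x \<in> F \<Longrightarrow> 2 * \<epsilon> \<le> x" using fF e2 by auto
  have p: "0 < 2 * \<epsilon>" using fF pos e2 by auto
  have h: "2 * \<epsilon> \<le> 1/2" using le[of "1/2"] by (simp add: F_def)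
  have "gd D1 u1 (2 * \<epsilon>)" unfolding gd_def using le p h by (auto simp: F_def)
  moreover have "gd D2 u2 (2 * \<epsilon>)" unfolding gd_def using le p h by (auto simp: F_def)
  moreover have "(D1 = D2 \<and> \<sigma>1 = \<sigma>2) \<longrightarrow> (\<exists>j<D1. 2 * \<epsilon> \<le> \<bar>u1 j - u2 j\<bar>)"
  proof
    assume h: "D1 = D2 \<and> \<sigma>1 = \<sigma>2"
    then show "\<exists>j<D1. 2 * \<epsilon> \<le> \<bar>u1 j - u2 j\<bar>" using sj[OF h] le[of "\<bar>u1 (SOME j. j < D1 \<and> u1 j \<noteq> u2 j) - u2 (SOME j. j < D1 \<and> u1 j \<noteq> u2 j)\<bar>"]
      by (auto simp: F_def G_def)
  qed
  ultimately show ?thesis by blast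
qed

lemma hausdorff: "Hausdorff_space (realisation Cs d)"
  unfolding Hausdorff_space_def topspace_real
proof (intro allI impI, elim conjE)
  fix X Y assume X: "X \<in> CL" and Y: "Y \<in> CL" and XY: "X \<noteq> Y"
  obtain P where P: "P \<in> TOP" "X = cls P" using X by (auto simp: CL_eq)
  obtain Q where Q: "Q \<in> TOP" "Y = cls Q" using Y by (auto simp: CL_eq)
  define A where "A = nf P"
  define B where "B = nf Q"
  have AT: "A \<in> TOP" "B \<in> TOP" using P Q nf_TOP by (auto simp: A_def B_def)
  have XA: "X = cls A" using P cls_eq[OF P(1) AT(1)] nf_nf[OF P(1)] by (simp add: A_def)
  have YB: "Y = cls B" using Q cls_eq[OF Q(1) AT(2)] nf_nf[OF Q(1)] by (simp add: B_def)
  have AB: "A \<noteq> B" using XA YB XY by auto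
  have iA: "interior_pt A" "interior_pt B" using nf_interior P Q by (auto simp: A_def B_def)
  obtain D1 \<sigma>1 u1 where Ae: "A = ((D1, \<sigma>1), u1)" by (metis prod.collapse)
  obtain D2 \<sigma>2 u2 where Be: "B = ((D2, \<sigma>2), u2)" by (metis prod.collapse)
  have cu: "u1 \<in> cube D1" "u2 \<in> cube D2" using AT Ae Be by (auto simp: TOP_iff)
  have ne: "\<exists>j<D1. u1 j \<noteq> u2 j" if "D1 = D2 \<and> \<sigma>1 = \<sigma>2"
  proof (rule ccontr)
    assume "\<not> (\<exists>j<D1. u1 j \<noteq> u2 j)"
    then have "u1 = u2" using cu that by (auto simp: cube_def fun_eq_iff) (metis not_le)
    then show False using AB Ae Be that by simp
  qed
  obtain \<epsilon> where e: "gd D1 u1 (2 * \<epsilon>)" "gd D2 u2 (2 * \<epsilon>)"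
     "(D1 = D2 \<and> \<sigma>1 = \<sigma>2) \<longrightarrow> (\<exists>j<D1. 2 * \<epsilon> \<le> \<bar>u1 j - u2 j\<bar>)"
    using exists_eps[of D1 u1 D2 u2 \<sigma>1 \<sigma>2] iA ne Ae Be unfolding interior_pt_def by auto
  have ep: "0 < \<epsilon>" using e by (auto simp: gd_def)
  have g1: "gd (fst (fst A)) (snd A) \<epsilon>" using gd_mono[OF e(1) ep] ep Ae by simp
  have g2: "gd (fst (fst B)) (snd B) \<epsilon>" using gd_mono[OF e(2) ep] ep Be by simp
  have "disjnt (NB A \<epsilon>) (NB B \<epsilon>)"
    unfolding disjnt_def
  proof (rule ccontr)
    assume "NB A \<epsilon> \<inter> NB B \<epsilon> \<noteq> {}"
    then obtain Z where Z: "Z \<in> NB A \<epsilon>" "Z \<in> NB B \<epsilon>" by blast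
    then obtain Q1 Q2 where Zq: "Z \<in> CL" "Q1 \<in> Z" "near A \<epsilon> Q1" "Q2 \<in> Z" "near B \<epsilon> Q2"
      unfolding NB_def by blast
    have Z1: "Z = cls Q1" using in_CL_cls[OF Zq(1) Zq(2)] .
    have Q1T: "Q1 \<in> TOP" using Zq(1,2) Union_CL by blast
    have "near B \<epsilon> Q2 = near B \<epsilon> Q1" using near_cls[OF g2 Q1T] Zq(4) Z1 by blast
    then have nB: "near B \<epsilon> Q1" using Zq(5) by simp
    obtain m \<tau> v where Q1e: "Q1 = ((m, \<tau>), v)" by (metis prod.collapse)
    have "D1 = D2 \<and> \<sigma>1 = \<sigma>2 \<and> (\<forall>j<D1. \<bar>u1 j - u2 j\<bar> < 2 * \<epsilon>)"
      using sep[OF e(1) e(2)] Zq(3) nB Ae Be Q1e by (auto simp: near_def)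
    then show False using e(3) by force
  qed
  moreover have "openin (realisation Cs d) (NB A \<epsilon>)" "openin (realisation Cs d) (NB B \<epsilon>)"
    using openin_NB g1 g2 by auto
  moreover have "X \<in> NB A \<epsilon>" "Y \<in> NB B \<epsilon>" using self_NB AT ep XA YB by auto
  ultimately show "\<exists>U V. openin (realisation Cs d) U \<and> openin (realisation Cs d) V \<and> X \<in> U \<and> Y \<in> V \<and> disjnt U V"
    by blast
qed

end

lemma nth_rank:
  fixes S :: "nat set"
  assumes "finite S" "j < card S"
  shows "sorted_list_of_set S ! j \<in> S \<and> card {q \<in> S. q < sorted_list_of_set S ! j} = j"
proof -
  define xs where "xs = sorted_list_of_set S"
  have sw: "sorted_wrt (<) xs" and st: "set xs = S" and dl: "distinct xs" and len: "length xs = card S"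
    using assms by (auto simp: xs_def strict_sorted_list_of_set)
  have jl: "j < length xs" using assms len by simp
  have "{q \<in> S. q < xs ! j} = set (take j xs)"
  proof (intro set_eqI iffI)
    fix q assume "q \<in> {q \<in> S. q < xs ! j}"
    then obtain i where i: "i < length xs" "xs ! i = q" "q < xs ! j" using st by (auto simp: in_set_conv_nth)
    have "i < j"
    proof (rule ccontr)
      assume "\<not> i < j"
      then have "j \<le> i" by simp
      then have "xs ! j \<le> xs ! i" using sw i jl
        by (metis le_eq_less_or_eq order.strict_implies_order sorted_wrt_nth_less)
      then show False using i by simp
    qed
    then show "q \<in> set (take j xs)" using i by (auto simp: in_set_conv_nth)
  next
    fix q assume "q \<in> set (take j xs)"
    then obtain i where i: "i < j" "xs ! i = q" using jl by (auto simp: in_set_conv_nth)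
    then have "q < xs ! j" using sw jl by (metis sorted_wrt_nth_less)
    then show "q \<in> {q \<in> S. q < xs ! j}" using i jl st by auto
  qed
  moreover have "card (set (take j xs)) = j" using dl jl by (simp add: distinct_card)
  moreover have "xs ! j \<in> S" using st jl by auto
  ultimately show ?thesis by (simp add: xs_def)
qed

lemma rank_nth:
  fixes S :: "nat set"
  assumes "finite S" "s \<in> S"
  shows "sorted_list_of_set S ! card {q \<in> S. q < s} = s"
proof -
  obtain i where i: "i < length (sorted_list_of_set S)" "sorted_list_of_set S ! i = s"
    using assms by (metis in_set_conv_nth set_sorted_list_of_set)
  then have "card {q \<in> S. q < s} = i" using nth_rank[of S i] assms by simp
  then show ?thesis using i by simp
qed

definition ren :: "nat \<Rightarrow> nat set \<Rightarrow> nat set" where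
  "ren s S = (\<lambda>i. if i < s then i else i - 1) ` (S - {s})"

lemma ren_mem: "i \<in> ren s S \<longleftrightarrow> (if i < s then i \<in> S else Suc i \<in> S)"
proof
  assume "i \<in> ren s S"
  then obtain i' where "i' \<in> S" "i' \<noteq> s" "i = (if i' < s then i' else i' - 1)" unfolding ren_def image_iff by blast
  then show "if i < s then i \<in> S else Suc i \<in> S" by (auto split: if_splits)
next
  assume h: "if i < s then i \<in> S else Suc i \<in> S"
  show "i \<in> ren s S"
  proof (cases "i < s")
    case True then show ?thesis using h unfolding ren_def by (intro image_eqI[of _ _ i]) auto
  next
    case False then show ?thesis using h unfolding ren_def by (intro image_eqI[of _ _ "Suc i"]) auto
  qed
qed

lemma ren_card: "finite S \<Longrightarrow> s \<in> S \<Longrightarrow> card (ren s S) = card S - 1"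
proof -
  assume a: "finite S" "s \<in> S"
  have "inj_on (\<lambda>i. if i < s then i else i - 1) (S - {s})"
    by (auto simp: inj_on_def split: if_splits)
  then have "card (ren s S) = card (S - {s})" unfolding ren_def by (rule card_image)
  then show ?thesis using a by simp
qed

lemma ren_sub: "S \<subseteq> {1..N} \<Longrightarrow> s \<in> S \<Longrightarrow> ren s S \<subseteq> {1..N - 1}"
proof
  fix y assume a: "S \<subseteq> {1..N}" "s \<in> S" "y \<in> ren s S"
  then obtain x where x: "x \<in> S" "x \<noteq> s" "y = (if x < s then x else x - 1)"
    unfolding ren_def image_iff by blast
  have "1 \<le> x" "x \<le> N" "1 \<le> s" "s \<le> N" using a x by auto
  then show "y \<in> {1..N - 1}" using x by auto
qed

lemma ren_finite: "finite S \<Longrightarrow> finite (ren s S)"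
  by (simp add: ren_def)

lemma ren_rank_lo:
  assumes "t \<le> s"
  shows "card {q \<in> ren s S. q < t} = card {q \<in> S. q < t}"
proof -
  have "{q \<in> ren s S. q < t} = {q \<in> S. q < t}" using assms by (auto simp: ren_mem)
  then show ?thesis by simp
qed

lemma ren_rank_hi:
  assumes fS: "finite S" and sS: "s \<in> S" and st: "s \<le> t"
  shows "card {q \<in> ren s S. q < t} = card {q \<in> S. q < Suc t} - 1"
proof -
  define h where "h = (\<lambda>i::nat. if i < s then i else Suc i)"
  have hS: "h i \<in> S \<longleftrightarrow> i \<in> ren s S" for i by (auto simp: h_def ren_mem)
  have "{q \<in> S. q < Suc t} = insert s (h ` {q \<in> ren s S. q < t})"
  proof (intro set_eqI iffI)
    fix q assume q: "q \<in> {q \<in> S. q < Suc t}"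
    show "q \<in> insert s (h ` {q \<in> ren s S. q < t})"
    proof (cases "q = s")
      case False
      show ?thesis
      proof (cases "q < s")
        case True
        then have "q \<in> {q \<in> ren s S. q < t}" "h q = q" using q st by (auto simp: h_def ren_mem)
        then show ?thesis by (metis imageI insertCI)
      next
        case F2: False
        then have "q - 1 \<in> {q \<in> ren s S. q < t}" "h (q - 1) = q" using q False by (auto simp: h_def ren_mem)
        then show ?thesis by (metis imageI insertCI)
      qed
    qed (use sS in simp)
  next
    fix q assume "q \<in> insert s (h ` {q \<in> ren s S. q < t})"
    then show "q \<in> {q \<in> S. q < Suc t}"
    proof
      assume "q = s" then show ?thesis using sS st by simp
    next
      assume "q \<in> h ` {q \<in> ren s S. q < t}"
      then obtain i where i: "i \<in> ren s S" "i < t" "q = h i" by blast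
      then show ?thesis using hS[of i] by (auto simp: h_def)
    qed
  qed
  moreover have "s \<notin> h ` {q \<in> ren s S. q < t}" by (auto simp: h_def)
  moreover have "inj h" by (auto simp: inj_def h_def split: if_splits)
  moreover have "finite {q \<in> ren s S. q < t}" using assms by (simp add: ren_finite)
  ultimately have "card {q \<in> S. q < Suc t} = Suc (card {q \<in> ren s S. q < t})"
    by (simp add: card_image inj_on_subset[of h UNIV])
  then show ?thesis by simp
qed

lemma jsect_face:
  assumes fS: "finite S" and sS: "s \<in> S" and s1: "1 \<le> s" and sN: "s \<le> N"
    and rk: "card {q \<in> S. q < s} = j - 1" and j1: "1 \<le> j"
  shows "jsect S N (cube_face j e t) = cube_face s e (jsect (ren s S) (N - 1) t)"
proof
  fix p
  have L: "jsect S N (cube_face j e t) p = (if p < N then (if Suc p \<in> S then cube_face j e t (card {q \<in> S. q \<le> p}) else 1/2) else 0)"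
    by (simp add: jsect_def)
  have V: "\<And>r. jsect (ren s S) (N - 1) t r = (if r < N - 1 then (if Suc r \<in> ren s S then t (card {q \<in> ren s S. q \<le> r}) else 1/2) else 0)"
    by (simp add: jsect_def)
  show "jsect S N (cube_face j e t) p = cube_face s e (jsect (ren s S) (N - 1) t) p"
  proof (cases "N \<le> p")
    case True then show ?thesis using sN s1 by (auto simp: jsect_def cube_face_apply)
  next
    case pN: False
    show ?thesis
    proof (cases "p < s - 1")
      case True
      have c1: "{q \<in> ren s S. q \<le> p} = {q \<in> S. q \<le> p}" using True by (auto simp: ren_mem)
      have m1: "Suc p \<in> ren s S \<longleftrightarrow> Suc p \<in> S" using True by (auto simp: ren_mem)
      have pl: "p < N - 1" using True sN by auto
      have R: "cube_face s e (jsect (ren s S) (N - 1) t) p = jsect (ren s S) (N - 1) t p"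
        using True by (simp add: cube_face_apply)
      show ?thesis
      proof (cases "Suc p \<in> S")
        case sp: True
        have "insert (Suc p) {q \<in> S. q \<le> p} \<subseteq> {q \<in> S. q < s}" using sp True by auto
        then have "card (insert (Suc p) {q \<in> S. q \<le> p}) \<le> card {q \<in> S. q < s}" using fS by (intro card_mono) auto
        then have lt: "card {q \<in> S. q \<le> p} < j - 1" using rk fS by simp
        have "cube_face j e t (card {q \<in> S. q \<le> p}) = t (card {q \<in> S. q \<le> p})"
          using lt by (simp add: cube_face_apply)
        then show ?thesis using L V[of p] R pN True sp c1 m1 pl by simp
      next
        case sp: False
        then show ?thesis using L V[of p] R pN True m1 pl by simp
      qed
    next
      case False
      show ?thesis
      proof (cases "p = s - 1")
        case True
        have "{q \<in> S. q \<le> p} = {q \<in> S. q < s}" using True s1 by auto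
        then have c: "card {q \<in> S. q \<le> p} = j - 1" using rk by simp
        have sp: "Suc p \<in> S" using True s1 sS by simp
        have R: "cube_face s e (jsect (ren s S) (N - 1) t) p = ev e" using True by (simp add: cube_face_apply)
        have "cube_face j e t (j - 1) = ev e" by (simp add: cube_face_apply)
        then show ?thesis using L R pN sp c by simp
      next
        case F2: False
        then have ps: "s \<le> p" using False by auto
        have e1: "{q \<in> ren s S. q < p} = {q \<in> ren s S. q \<le> p - 1}" using ps s1 by auto
        have e2: "{q \<in> S. q < Suc p} = {q \<in> S. q \<le> p}" by auto
        have "card {q \<in> ren s S. q \<le> p - 1} = card {q \<in> ren s S. q < p}" by (simp only: e1)
        also have "\<dots> = card {q \<in> S. q < Suc p} - 1" using ren_rank_hi[OF fS sS ps] .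
        also have "\<dots> = card {q \<in> S. q \<le> p} - 1" by (simp only: e2)
        finally have r1: "card {q \<in> ren s S. q \<le> p - 1} = card {q \<in> S. q \<le> p} - 1" .
        have "insert s {q \<in> S. q < s} \<subseteq> {q \<in> S. q \<le> p}" using ps sS by auto
        then have "card (insert s {q \<in> S. q < s}) \<le> card {q \<in> S. q \<le> p}" using fS by (intro card_mono) auto
        then have ge: "j \<le> card {q \<in> S. q \<le> p}" using rk fS j1 by simp
        have mem: "Suc (p - 1) \<in> ren s S \<longleftrightarrow> Suc p \<in> S" using ps s1 by (auto simp: ren_mem)
        have R: "cube_face s e (jsect (ren s S) (N - 1) t) p = jsect (ren s S) (N - 1) t (p - 1)"
          using F2 False by (simp add: cube_face_apply)
        have pl: "p - 1 < N - 1" using pN ps s1 by auto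
        have n1: "\<not> card {q \<in> S. q \<le> p} < j - 1" "card {q \<in> S. q \<le> p} \<noteq> j - 1" using ge j1 by auto
        have cf: "cube_face j e t (card {q \<in> S. q \<le> p}) = t (card {q \<in> S. q \<le> p} - 1)"
          using n1 by (simp add: cube_face_apply)
        show ?thesis using L V[of "p - 1"] R pN pl mem cf r1 by simp
      qed
    qed
  qed
qed

lemma jface_eq:
  assumes y: "(x, S) \<in> jcells n Cs k" and j: "1 \<le> j" "j \<le> k"
    and s_def: "s = sorted_list_of_set S ! (j - 1)"
  shows "s \<in> S" "card {q \<in> S. q < s} = j - 1" "1 \<le> s" "s \<le> n + k"
    "jface n d k j e (x, S) = (d (n + k) s e x, ren s S)"
proof -
  have fS: "finite S" "card S = k" "S \<subseteq> {1..n + k}" using y by (auto simp: jcells_def intro: finite_subset)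
  show s: "s \<in> S" "card {q \<in> S. q < s} = j - 1" using nth_rank[of S "j - 1"] fS j by (auto simp: s_def)
  show "1 \<le> s" "s \<le> n + k" using s fS by auto
  show "jface n d k j e (x, S) = (d (n + k) s e x, ren s S)"
    by (simp add: jface_def s_def ren_def Let_def)
qed

lemma ren_ren: "si < sj \<Longrightarrow> ren (sj - 1) (ren si S) = ren si (ren sj S)"
  by (auto simp: set_eq_iff ren_mem)

lemma cset_J:
  assumes "cset Cs d"
  shows "cset (jcells n Cs) (jface n d)"
proof -
  interpret C: cset Cs d by fact
  have mem: "jface n d k j e y \<in> jcells n Cs (k - 1)" if a: "1 \<le> j" "j \<le> k" "y \<in> jcells n Cs k" for k j e y
  proof -
    obtain x S where yS: "y = (x, S)" by (cases y)
    define s where "s = sorted_list_of_set S ! (j - 1)"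
    have J: "s \<in> S" "card {q \<in> S. q < s} = j - 1" "1 \<le> s" "s \<le> n + k"
      "jface n d k j e (x, S) = (d (n + k) s e x, ren s S)"
      using jface_eq(1-4)[of x S n Cs k j s] jface_eq(5)[of x S n Cs k j s d e] a yS s_def by auto
    have fS: "finite S" "card S = k" "S \<subseteq> {1..n + k}" "x \<in> Cs (n + k)" using a yS by (auto simp: jcells_def intro: finite_subset)
    have "d (n + k) s e x \<in> Cs (n + k - 1)" using J fS by (intro C.d_mem) auto
    moreover have "ren s S \<subseteq> {1..n + (k - 1)}" using ren_sub[OF fS(3) J(1)] a by auto
    moreover have "card (ren s S) = k - 1" using ren_card[OF fS(1) J(1)] fS by simp
    ultimately show ?thesis using J a yS by (simp add: jcells_def)
  qed
  have comm: "jface n d (k - 1) (j - 1) h (jface n d k i e y) = jface n d (k - 1) i e (jface n d k j h y)"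
    if a: "1 \<le> i" "i < j" "j \<le> k" "y \<in> jcells n Cs k" for k i j e h y
  proof -
    obtain x S where yS: "y = (x, S)" by (cases y)
    have y': "(x, S) \<in> jcells n Cs k" using a yS by simp
    define si where "si = sorted_list_of_set S ! (i - 1)"
    define sj where "sj = sorted_list_of_set S ! (j - 1)"
    have J': "sj \<in> S" "card {q \<in> S. q < sj} = j - 1" "1 \<le> sj" "sj \<le> n + k"
      "jface n d k j h (x, S) = (d (n + k) sj h x, ren sj S)"
      using jface_eq(1-4)[of x S n Cs k j sj] jface_eq(5)[of x S n Cs k j sj d h] a y' sj_def by auto
    have I': "si \<in> S" "card {q \<in> S. q < si} = i - 1" "1 \<le> si" "si \<le> n + k"
      "jface n d k i e (x, S) = (d (n + k) si e x, ren si S)"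
      using jface_eq(1-4)[of x S n Cs k i si] jface_eq(5)[of x S n Cs k i si d e] a y' si_def by auto
    have fS: "finite S" "card S = k" "S \<subseteq> {1..n + k}" "x \<in> Cs (n + k)" using y' by (auto simp: jcells_def intro: finite_subset)
    have lt: "si < sj"
    proof (rule ccontr)
      assume "\<not> si < sj"
      then have "{q \<in> S. q < sj} \<subseteq> {q \<in> S. q < si}" by auto
      then have "card {q \<in> S. q < sj} \<le> card {q \<in> S. q < si}" using fS by (intro card_mono) auto
      then show False using I' J' a by simp
    qed
    have m1: "jface n d k i e (x, S) \<in> jcells n Cs (k - 1)" using mem a y' by auto
    have m2: "jface n d k j h (x, S) \<in> jcells n Cs (k - 1)" using mem a y' by auto
    have fr1: "finite (ren si S)" using fS by (simp add: ren_finite)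
    have fr2: "finite (ren sj S)" using fS by (simp add: ren_finite)
    have sj1: "sj - 1 \<in> ren si S" using lt J' by (auto simp: ren_mem)
    have "card {q \<in> ren si S. q < sj - 1} = card {q \<in> S. q < Suc (sj - 1)} - 1"
      using ren_rank_hi[OF fS(1) I'(1)] lt by auto
    then have c1: "card {q \<in> ren si S. q < sj - 1} = j - 1 - 1" using J' by simp
    have n1: "sorted_list_of_set (ren si S) ! (j - 1 - 1) = sj - 1"
      using rank_nth[OF fr1 sj1] c1 by simp
    have si2: "si \<in> ren sj S" using lt I' by (auto simp: ren_mem)
    have c2: "card {q \<in> ren sj S. q < si} = i - 1" using ren_rank_lo[of si sj S] lt I' by simp
    have n2: "sorted_list_of_set (ren sj S) ! (i - 1) = si"
      using rank_nth[OF fr2 si2] c2 by simp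
    have nk: "n + (k - 1) = n + k - 1" using a by auto
    have L: "jface n d (k - 1) (j - 1) h (d (n + k) si e x, ren si S) = (d (n + k - 1) (sj - 1) h (d (n + k) si e x), ren (sj - 1) (ren si S))"
      using n1 nk by (simp add: jface_def ren_def Let_def)
    have R: "jface n d (k - 1) i e (d (n + k) sj h x, ren sj S) = (d (n + k - 1) si e (d (n + k) sj h x), ren si (ren sj S))"
      using n2 nk by (simp add: jface_def ren_def Let_def)
    have "d (n + k - 1) (sj - 1) h (d (n + k) si e x) = d (n + k - 1) si e (d (n + k) sj h x)"
      using C.d_comm[of si sj "n + k" x h e] I' J' lt fS by simp
    then show ?thesis using L R I'(5) J'(5) yS ren_ren[OF lt] by simp
  qed
  show ?thesis
    by unfold_locales (unfold is_cset_def, (intro conjI allI impI; elim conjE); (rule mem comm; assumption))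
qed

definition gpj :: "nat \<Rightarrow> ((nat \<times> ('a \<times> nat set)) \<times> (nat \<Rightarrow> real)) \<Rightarrow> ((nat \<times> 'a) \<times> (nat \<Rightarrow> real))" where
  "gpj n = (\<lambda>((k, (x, S)), t). ((n + k, x), jsect S (n + k) t))"

definition gmj :: "nat \<Rightarrow> (nat \<Rightarrow> 'a \<Rightarrow> 'b) \<Rightarrow> ((nat \<times> ('a \<times> nat set)) \<times> (nat \<Rightarrow> real)) \<Rightarrow> ((nat \<times> ('b \<times> nat set)) \<times> (nat \<Rightarrow> real))" where
  "gmj n f = (\<lambda>((k, (x, S)), t). ((k, (f (n + k) x, S)), t))"

definition grm :: "(nat \<Rightarrow> 'a \<Rightarrow> 'b) \<Rightarrow> ((nat \<times> 'a) \<times> (nat \<Rightarrow> real)) \<Rightarrow> ((nat \<times> 'b) \<times> (nat \<Rightarrow> real))" where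
  "grm f = (\<lambda>((m, x), t). ((m, f m x), t))"

lemma jproj_eq: "jproj n Cs d = liftmap (crel Cs d) (gpj n)"
  by (simp add: jproj_def gpj_def)

lemma jmap_eq: "jmap n Ds d' f = liftmap (crel (jcells n Ds) (jface n d')) (gmj n f)"
  by (simp add: jmap_def gmj_def)

lemma realmap_eq: "realmap Ds d' f = liftmap (crel Ds d') (grm f)"
  by (simp add: realmap_def grm_def)

lemma cube_val: "t \<in> cube k \<Longrightarrow> 0 \<le> t r \<and> t r \<le> 1"
  unfolding cube_def by (cases "r < k") auto

lemma jsect_cube: "t \<in> cube k \<Longrightarrow> jsect S N t \<in> cube N"
  unfolding cube_def[of N] jsect_def using cube_val[of t k] by auto

lemma card_le_lt:
  assumes "finite S" "card S = k" "Suc p \<in> S"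
  shows "card {q \<in> S. q \<le> p} < k"
proof -
  have "{q \<in> S. q \<le> p} \<subseteq> S" "Suc p \<notin> {q \<in> S. q \<le> p}" by auto
  then have "{q \<in> S. q \<le> p} \<subset> S" using assms(3) by blast
  then show ?thesis using assms psubset_card_mono by blast
qed

lemma jsect_interior:
  assumes "\<forall>j<k. 0 < t j \<and> t j < 1" "finite S" "card S = k"
  shows "\<forall>p<N. 0 < jsect S N t p \<and> jsect S N t p < 1"
  using assms card_le_lt[of S k] by (auto simp: jsect_def)

lemma TOPJ: "((k, (x, S)), t) \<in> topspace (cdisj (jcells n Cs)) \<longleftrightarrow>
   x \<in> Cs (n + k) \<and> S \<subseteq> {1..n + k} \<and> card S = k \<and> t \<in> cube k"
  by (simp add: topspace_cdisj jcells_def)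

lemma gp_TOP: "P \<in> topspace (cdisj (jcells n Cs)) \<Longrightarrow> gpj n P \<in> topspace (cdisj Cs)"
  by (cases P) (auto simp: gpj_def topspace_cdisj jcells_def intro: jsect_cube)

lemma gp_interior: "P \<in> topspace (cdisj (jcells n Cs)) \<Longrightarrow> interior_pt P \<Longrightarrow> interior_pt (gpj n P)"
proof -
  assume P: "P \<in> topspace (cdisj (jcells n Cs))" "interior_pt P"
  obtain k x S t where Pe: "P = ((k, (x, S)), t)" by (metis prod.collapse)
  have "finite S" "card S = k" using P Pe by (auto simp: TOPJ intro: finite_subset)
  then show ?thesis using P Pe jsect_interior[of k t S "n + k"] by (auto simp: gpj_def interior_pt_def)
qed

lemma gp_resp:
  assumes cs: "cset Cs d" and PQ: "(P, Q) \<in> cgen (jcells n Cs) (jface n d)"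
  shows "cset.nf d (gpj n P) = cset.nf d (gpj n Q)"
proof -
  interpret C: cset Cs d by fact
  obtain k j e y t where e: "P = ((k - 1, jface n d k j e y), t)" "Q = ((k, y), cube_face j e t)"
    "1 \<le> j" "j \<le> k" "y \<in> jcells n Cs k" "t \<in> cube (k - 1)" using PQ by (auto simp: cgen_def)
  obtain x S where y: "y = (x, S)" by (cases y)
  define s where "s = sorted_list_of_set S ! (j - 1)"
  have J: "s \<in> S" "card {q \<in> S. q < s} = j - 1" "1 \<le> s" "s \<le> n + k"
      "jface n d k j e (x, S) = (d (n + k) s e x, ren s S)"
    using jface_eq(1-4)[of x S n Cs k j s] jface_eq(5)[of x S n Cs k j s d e] e y s_def by auto
  have fS: "finite S" "x \<in> Cs (n + k)" using e y by (auto simp: jcells_def intro: finite_subset)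
  have nk: "n + (k - 1) = n + k - 1" using e by auto
  have gP: "gpj n P = ((n + k - 1, d (n + k) s e x), jsect (ren s S) (n + k - 1) t)"
    using e y J nk by (simp add: gpj_def)
  have gQ: "gpj n Q = ((n + k, x), cube_face s e (jsect (ren s S) (n + k - 1) t))"
    using e y jsect_face[OF fS(1) J(1) J(3) J(4) J(2) e(3)] by (simp add: gpj_def)
  have "jsect (ren s S) (n + k - 1) t \<in> cube (n + k - 1)" using e by (intro jsect_cube)
  then show ?thesis using gP gQ C.nf_step[OF J(3) J(4) fS(2)] by simp
qed

lemma gm_TOP: "is_cmap Cs dC Ds dD f \<Longrightarrow> P \<in> topspace (cdisj (jcells n Cs)) \<Longrightarrow> gmj n f P \<in> topspace (cdisj (jcells n Ds))"
  by (cases P) (auto simp: gmj_def TOPJ is_cmap_def)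

lemma gm_interior: "interior_pt (gmj n f P) = interior_pt P"
  by (cases P) (auto simp: gmj_def interior_pt_def)

lemma gm_resp:
  assumes cs: "cset Ds dD" and fm: "is_cmap Cs dC Ds dD f" and PQ: "(P, Q) \<in> cgen (jcells n Cs) (jface n dC)"
  shows "cset.nf (jface n dD) (gmj n f P) = cset.nf (jface n dD) (gmj n f Q)"
proof -
  interpret JD: cset "jcells n Ds" "jface n dD" using cset_J[OF cs] .
  obtain k j e y t where e: "P = ((k - 1, jface n dC k j e y), t)" "Q = ((k, y), cube_face j e t)"
    "1 \<le> j" "j \<le> k" "y \<in> jcells n Cs k" "t \<in> cube (k - 1)" using PQ by (auto simp: cgen_def)
  obtain x S where y: "y = (x, S)" by (cases y)
  define s where "s = sorted_list_of_set S ! (j - 1)"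
  have J: "s \<in> S" "card {q \<in> S. q < s} = j - 1" "1 \<le> s" "s \<le> n + k"
      "jface n dC k j e (x, S) = (dC (n + k) s e x, ren s S)"
    using jface_eq(1-4)[of x S n Cs k j s] jface_eq(5)[of x S n Cs k j s dC e] e y s_def by auto
  have fx: "(f (n + k) x, S) \<in> jcells n Ds k" using e y fm by (auto simp: jcells_def is_cmap_def)
  have JD: "jface n dD k j e (f (n + k) x, S) = (dD (n + k) s e (f (n + k) x), ren s S)"
    using jface_eq(5)[of "f (n + k) x" S n Ds k j s dD e] fx e s_def by auto
  have xC: "x \<in> Cs (n + k)" using e y by (auto simp: jcells_def)
  have fc: "f (n + k - 1) (dC (n + k) s e x) = dD (n + k) s e (f (n + k) x)"
    using fm J xC unfolding is_cmap_def by blast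
  have nk: "n + (k - 1) = n + k - 1" using e by auto
  have "gmj n f P = ((k - 1, jface n dD k j e (f (n + k) x, S)), t)"
    using e y J JD fc nk by (simp add: gmj_def)
  moreover have "gmj n f Q = ((k, (f (n + k) x, S)), cube_face j e t)" using e y by (simp add: gmj_def)
  ultimately show ?thesis using JD.nf_step[OF e(3) e(4) fx e(6)] by simp
qed

lemma gr_TOP: "is_cmap Cs dC Ds dD f \<Longrightarrow> P \<in> topspace (cdisj Cs) \<Longrightarrow> grm f P \<in> topspace (cdisj Ds)"
  by (cases P) (auto simp: grm_def topspace_cdisj is_cmap_def)

lemma gr_interior: "interior_pt (grm f P) = interior_pt P"
  by (cases P) (auto simp: grm_def interior_pt_def)

lemma gr_resp:
  assumes cs: "cset Ds dD" and fm: "is_cmap Cs dC Ds dD f" and PQ: "(P, Q) \<in> cgen Cs dC"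
  shows "cset.nf dD (grm f P) = cset.nf dD (grm f Q)"
proof -
  interpret D: cset Ds dD by fact
  obtain N i e x t where e: "P = ((N - 1, dC N i e x), t)" "Q = ((N, x), cube_face i e t)"
    "1 \<le> i" "i \<le> N" "x \<in> Cs N" "t \<in> cube (N - 1)" using PQ by (auto simp: cgen_def)
  have fc: "f (N - 1) (dC N i e x) = dD N i e (f N x)" using fm e unfolding is_cmap_def by blast
  have "f N x \<in> Ds N" using fm e by (auto simp: is_cmap_def)
  then show ?thesis using e fc D.nf_step[OF e(3) e(4)] by (simp add: grm_def)
qed

lemma cont_sum:
  assumes "\<And>i. i \<in> I \<Longrightarrow> continuous_map (X i) Y (\<lambda>x. f (i, x))"
  shows "continuous_map (sum_topology X I) Y f"
  unfolding continuous_map_def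
proof (intro conjI allI impI)
  show "f \<in> topspace (sum_topology X I) \<rightarrow> topspace Y"
    using assms by (auto simp: continuous_map_def Pi_iff)
next
  fix U assume U: "openin Y U"
  show "openin (sum_topology X I) {x \<in> topspace (sum_topology X I). f x \<in> U}"
    unfolding openin_sum_topology
  proof (intro conjI ballI)
    fix i assume i: "i \<in> I"
    have "{x. (i, x) \<in> {x \<in> topspace (sum_topology X I). f x \<in> U}} = {x \<in> topspace (X i). f (i, x) \<in> U}"
      using i by auto
    then show "openin (X i) {x. (i, x) \<in> {x \<in> topspace (sum_topology X I). f x \<in> U}}"
      using assms[OF i] U by (simp add: continuous_map_def)
  qed auto
qed

lemma jsect_cont: "continuous_on A (jsect S N)"
proof (rule continuous_on_coordinatewise_then_product)
  fix p
  show "continuous_on A (\<lambda>x. jsect S N x p)"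
    unfolding jsect_def
    by (cases "p < N"; cases "Suc p \<in> S") (auto intro: continuous_on_subset[OF continuous_on_product_coordinates])
qed

lemma emb_cont: "continuous_on A (emb \<beta> m)"
proof (rule continuous_on_coordinatewise_then_product)
  fix p
  show "continuous_on A (\<lambda>x. emb \<beta> m x p)"
    unfolding emb_val
    by (cases "p < m"; cases "\<beta> p") (auto intro: continuous_on_subset[OF continuous_on_product_coordinates])
qed

lemma cont_gp: "continuous_map (cdisj (jcells n Cs)) (cdisj Cs) (gpj n)"
  unfolding cdisj_def[of "jcells n Cs"]
proof (rule cont_sum)
  fix i assume i: "i \<in> Sigma UNIV (jcells n Cs)"
  obtain k x S where ie: "i = (k, (x, S))" by (metis prod.collapse)
  have x: "x \<in> Cs (n + k)" using i ie by (auto simp: jcells_def)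
  have c1: "continuous_map (cube_top k) (cube_top (n + k)) (jsect S (n + k))"
    by (auto simp: cube_top_def jsect_cont jsect_cube)
  have c2: "continuous_map (cube_top (n + k)) (cdisj Cs) (\<lambda>v. ((n + k, x), v))"
    unfolding cdisj_def using continuous_map_component_injection[of "(n + k, x)" "Sigma UNIV Cs" "\<lambda>(n, x). cube_top n"] x
    by simp
  have "continuous_map (cube_top k) (cdisj Cs) ((\<lambda>v. ((n + k, x), v)) \<circ> jsect S (n + k))"
    using c1 c2 by (rule continuous_map_compose)
  then show "continuous_map ((\<lambda>(n, x). cube_top n) i) (cdisj Cs) (\<lambda>t. gpj n (i, t))"
    by (simp add: ie gpj_def o_def)
qed

lemma cont_gm:
  assumes fm: "is_cmap Cs dC Ds dD f"
  shows "continuous_map (cdisj (jcells n Cs)) (cdisj (jcells n Ds)) (gmj n f)"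
  unfolding cdisj_def[of "jcells n Cs"]
proof (rule cont_sum)
  fix i assume i: "i \<in> Sigma UNIV (jcells n Cs)"
  obtain k x S where ie: "i = (k, (x, S))" by (metis prod.collapse)
  have x: "(k, (f (n + k) x, S)) \<in> Sigma UNIV (jcells n Ds)" using i ie fm by (auto simp: jcells_def is_cmap_def)
  have "continuous_map (cube_top k) (cdisj (jcells n Ds)) (\<lambda>v. ((k, (f (n + k) x, S)), v))"
    unfolding cdisj_def using continuous_map_component_injection[OF x, of "\<lambda>(n, x). cube_top n"]
    by simp
  then show "continuous_map ((\<lambda>(n, x). cube_top n) i) (cdisj (jcells n Ds)) (\<lambda>t. gmj n f (i, t))"
    by (simp add: ie gmj_def)
qed

lemma hausdorff_fun: "Hausdorff_space (euclidean :: (nat \<Rightarrow> real) topology)"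
  by (metis Hausdorff_space_euclidean Hausdorff_space_product_topology euclidean_product_topology)

lemma cube_PiE: "cube k = PiE UNIV (\<lambda>i. if i < k then {0..1} else {0::real})"
  unfolding cube_def by (auto simp: PiE_iff split: if_splits)

lemma compact_cube: "compactin euclidean (cube k)"
proof -
  have "compactin (product_topology (\<lambda>_. euclidean) UNIV) (PiE UNIV (\<lambda>i. if i < k then {0..1} else {0::real}))"
    by (subst compactin_PiE) auto
  then show ?thesis by (simp add: euclidean_product_topology cube_PiE)
qed

lemma compact_space_cube: "compact_space (cube_top k)"
  unfolding cube_top_def using compact_cube by (rule compact_space_subtopology)

lemma hausdorff_cube: "Hausdorff_space (cube_top k)"
  unfolding cube_top_def using hausdorff_fun by (rule Hausdorff_space_subtopology)

definition Pat :: "nat \<Rightarrow> (nat \<Rightarrow> bool option) set" where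
  "Pat m = (\<lambda>g p. if p < m then g p else None) ` (PiE {..<m} (\<lambda>_. UNIV))"

lemma finite_Pat: "finite (Pat m)"
  unfolding Pat_def by (intro finite_imageI finite_PiE) auto

lemma bpat_Pat: "bpat u m \<in> Pat m"
  unfolding Pat_def
  by (rule image_eqI[of _ _ "restrict (bpat u m) {..<m}"]) (auto simp: bpat_def fun_eq_iff)

context cset begin

lemma J_cset: "cset (jcells n Cs) (jface n d)"
  using cset_J[OF cset_axioms] .

lemma jproj_cls:
  assumes P: "P \<in> topspace (cdisj (jcells n Cs))"
  shows "jproj n Cs d (cset.cls (jcells n Cs) (jface n d) P) = cls (gpj n P)"
proof -
  interpret JC: cset "jcells n Cs" "jface n d" by (rule J_cset)
  interpret CC: cset2 "jcells n Cs" "jface n d" Cs d by unfold_locales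
  show ?thesis unfolding jproj_eq
    using CC.lift_cls[of "gpj n", OF gp_TOP gp_resp[OF cset_axioms] P] by simp
qed

lemma jproj_closed: "closed_map (realisation (jcells n Cs) (jface n d)) (realisation Cs d) (jproj n Cs d)"
  unfolding closed_map_def
proof (intro allI impI)
  interpret JC: cset "jcells n Cs" "jface n d" by (rule J_cset)
  fix F assume "closedin (realisation (jcells n Cs) (jface n d)) F"
  then have F: "F \<subseteq> JC.CL" "closedin (cdisj (jcells n Cs)) (\<Union>F)" by (auto simp: JC.closedin_real)
  have FT: "\<Union>F \<subseteq> JC.TOP" using F JC.Union_CL by blast
  have rep: "\<exists>P. P \<in> JC.TOP \<and> interior_pt P \<and> X = JC.cls P" if XF: "X \<in> F" for X
  proof -
    obtain P0 where "P0 \<in> JC.TOP" "X = JC.cls P0" using XF F by (auto simp: JC.CL_eq)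
    then show ?thesis using JC.nf_TOP JC.nf_interior JC.nf_nf JC.cls_eq
      by (intro exI[of _ "JC.nf P0"]) auto
  qed
  have img: "jproj n Cs d X = cls (gpj n P)" if "P \<in> JC.TOP" "X = JC.cls P" for X P
    using jproj_cls[OF that(1)] that(2) by simp
  have sub: "jproj n Cs d ` F \<subseteq> CL"
  proof
    fix Y assume "Y \<in> jproj n Cs d ` F"
    then obtain X where XY: "X \<in> F" "Y = jproj n Cs d X" by blast
    then obtain P where PT: "P \<in> JC.TOP" "X = JC.cls P" using rep by blast
    have "gpj n P \<in> TOP" using gp_TOP[OF PT(1)] .
    moreover have "Y = cls (gpj n P)" using img[OF PT] XY(2) by simp
    ultimately show "Y \<in> CL" by (auto simp: CL_eq)
  qed
  have slice: "closedin (cube_top m) {u. ((m, c), u) \<in> \<Union>(jproj n Cs d ` F)}" if c: "c \<in> Cs m" for m c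
  proof -
    define K where "K = (\<lambda>\<beta> S. (\<lambda>t. emb \<beta> m (jsect S (m - cnt \<beta> m) t)) `
        {t. ((m - cnt \<beta> m - n, (dpat d \<beta> m m c, S)), t) \<in> \<Union>F \<and> n \<le> m - cnt \<beta> m})"
    have eq: "{u. ((m, c), u) \<in> \<Union>(jproj n Cs d ` F)} = (\<Union>\<beta>\<in>Pat m. \<Union>S\<in>Pow {1..m}. K \<beta> S)"
    proof (intro set_eqI iffI)
      fix u assume "u \<in> {u. ((m, c), u) \<in> \<Union>(jproj n Cs d ` F)}"
      then obtain X where X: "X \<in> F" "((m, c), u) \<in> jproj n Cs d X" by auto
      obtain P where P: "P \<in> JC.TOP" "interior_pt P" "X = JC.cls P" using rep[OF X(1)] by blast
      obtain k x S t where Pe: "P = ((k, (x, S)), t)" by (metis prod.collapse)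
      have m1: "((m, c), u) \<in> cls (gpj n P)" using X img P by simp
      have gT: "gpj n P \<in> TOP" using P gp_TOP by blast
      have "nf ((m, c), u) = nf (gpj n P)" using m1 gT by (simp add: cls_iff)
      also have "\<dots> = gpj n P" using gp_interior[OF P(1,2)] by (rule nf_of_interior)
      finally have nfe: "nf ((m, c), u) = ((n + k, x), jsect S (n + k) t)" by (simp add: Pe gpj_def)
      define \<beta> where "\<beta> = bpat u m"
      have e1: "m - cnt \<beta> m = n + k" "dpat d \<beta> m m c = x" "strip \<beta> m u = jsect S (n + k) t"
        using nfe by (simp_all add: nf_def \<beta>_def)
      have "emb \<beta> m (strip \<beta> m u) = u"
        by (rule strip_emb) (auto simp: \<beta>_def bpat_def ev_def split: if_splits)
      then have ue: "u = emb \<beta> m (jsect S (n + k) t)" using e1(3) by simp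
      have PU: "P \<in> \<Union>F" using P X cls_self JC.cls_self by blast
      have St: "S \<subseteq> {1..n + k}" using P Pe by (simp add: TOPJ)
      have "n + k \<le> m" using e1(1) by linarith
      then have "{1..n + k} \<subseteq> {1..m}" by auto
      then have "S \<in> Pow {1..m}" using St by blast
      moreover have "u \<in> K \<beta> S" unfolding K_def using ue e1 PU Pe by (intro image_eqI[of _ _ t]) auto
      moreover have "\<beta> \<in> Pat m" by (simp add: \<beta>_def bpat_Pat)
      ultimately show "u \<in> (\<Union>\<beta>\<in>Pat m. \<Union>S\<in>Pow {1..m}. K \<beta> S)" by blast
    next
      fix u assume "u \<in> (\<Union>\<beta>\<in>Pat m. \<Union>S\<in>Pow {1..m}. K \<beta> S)"
      then obtain \<beta> S t where b: "u = emb \<beta> m (jsect S (m - cnt \<beta> m) t)"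
        "((m - cnt \<beta> m - n, (dpat d \<beta> m m c, S)), t) \<in> \<Union>F" "n \<le> m - cnt \<beta> m"
        unfolding K_def by blast
      define N' where "N' = m - cnt \<beta> m"
      define Q where "Q = ((N' - n, (dpat d \<beta> m m c, S)), t)"
      obtain X where X: "X \<in> F" "Q \<in> X" using b by (auto simp: Q_def N'_def)
      have QT: "Q \<in> JC.TOP" using X FT by blast
      have XQ: "X = JC.cls Q" using JC.in_CL_cls[of X Q] X F by blast
      have nN: "n + (N' - n) = N'" using b(3) N'_def by linarith
      have gQ: "gpj n Q = ((N', dpat d \<beta> m m c), jsect S N' t)" by (simp add: Q_def gpj_def nN)
      have gQT: "gpj n Q \<in> TOP" using gp_TOP[OF QT] .
      then have w: "jsect S N' t \<in> cube (m - cnt \<beta> m)" using gQ by (simp add: TOP_iff N'_def)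
      have "((N', dpat d \<beta> m m c), jsect S N' t) \<in> TOP" using gQT gQ by simp
      have rel: "(((m - cnt \<beta> m, dpat d \<beta> m m c), jsect S N' t), ((m, c), emb \<beta> m (jsect S N' t))) \<in> SYM"
        using c w by (intro rel_emb) auto
      have uT: "((m, c), u) \<in> TOP" using SYM_TOP[OF rel] gQT gQ b(1) by (simp add: N'_def)
      have "nf ((m, c), u) = nf (gpj n Q)" using SYM_nf[OF rel] gQ b(1) by (simp add: N'_def)
      then have "((m, c), u) \<in> cls (gpj n Q)" using uT gQT by (simp add: cls_iff)
      then have "((m, c), u) \<in> jproj n Cs d X" using img[OF QT XQ] by simp
      then show "u \<in> {u. ((m, c), u) \<in> \<Union>(jproj n Cs d ` F)}" using X by auto
    qed
    have Kc: "closedin (cube_top m) (K \<beta> S)" for \<beta> S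
    proof (cases "n \<le> m - cnt \<beta> m")
      case False then show ?thesis by (simp add: K_def)
    next
      case True
      define N' where "N' = m - cnt \<beta> m"
      define k where "k = N' - n"
      define T where "T = {t. ((k, (dpat d \<beta> m m c, S)), t) \<in> \<Union>F}"
      have KT: "K \<beta> S = (\<lambda>t. emb \<beta> m (jsect S N' t)) ` T" using True by (simp add: K_def T_def k_def N'_def)
      have Tc: "closedin (cube_top k) T"
      proof (cases "(k, (dpat d \<beta> m m c, S)) \<in> Sigma UNIV (jcells n Cs)")
        case True
        then show ?thesis using F(2) unfolding cdisj_def closedin_sum_topology T_def by auto
      next
        case False
        then have "T = {}" using FT by (auto simp: T_def topspace_cdisj)
        then show ?thesis by simp
      qed
      then have "compactin (cube_top k) T" using compact_space_cube closedin_compact_space by blast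
      moreover have "continuous_map (cube_top k) (cube_top m) (\<lambda>t. emb \<beta> m (jsect S N' t))"
      proof -
        have "continuous_on (cube k) (emb \<beta> m \<circ> jsect S N')"
          by (intro continuous_on_compose jsect_cont emb_cont)
        moreover have "emb \<beta> m (jsect S N' t) \<in> cube m" if "t \<in> cube k" for t
        proof -
          have "emb \<beta> m (jsect S N' t) \<in> cube (N' + cnt \<beta> m)"
            using jsect_cube[OF that] cnt_le[of \<beta> m] by (intro emb_cube) (auto simp: N'_def)
          then show ?thesis using cnt_le[of \<beta> m] by (simp add: N'_def)
        qed
        ultimately show ?thesis by (auto simp: cube_top_def o_def)
      qed
      ultimately have "compactin (cube_top m) (K \<beta> S)" unfolding KT by (rule image_compactin)
      then show ?thesis using hausdorff_cube compactin_imp_closedin by blast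
    qed
    have "closedin (cube_top m) (\<Union>\<beta>\<in>Pat m. \<Union>S\<in>Pow {1..m}. K \<beta> S)"
    proof -
      have inner: "closedin (cube_top m) (\<Union>S\<in>Pow {1..m}. K \<beta> S)" for \<beta>
        using Kc by (intro closedin_Union) auto
      show ?thesis using inner finite_Pat[of m] by (intro closedin_Union) auto
    qed
    then show ?thesis using eq by simp
  qed
  have "closedin (cdisj Cs) (\<Union>(jproj n Cs d ` F))"
    unfolding cdisj_def closedin_sum_topology
  proof (intro conjI ballI)
    show "\<Union>(jproj n Cs d ` F) \<subseteq> Sigma (Sigma UNIV Cs) (topspace \<circ> (\<lambda>(n, x). cube_top n))"
      using sub Union_CL by (fastforce simp: cdisj_def)
    fix i assume "i \<in> Sigma UNIV Cs"
    then obtain m c where i: "i = (m, c)" "c \<in> Cs m" by auto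
    show "closedin ((\<lambda>(n, x). cube_top n) i) {x. (i, x) \<in> \<Union>(jproj n Cs d ` F)}"
      using slice[OF i(2)] by (simp add: i)
  qed
  then show "closedin (realisation Cs d) (jproj n Cs d ` F)" using sub by (simp add: closedin_real)
qed

end

context cset begin

lemma CL_rep: "X \<in> CL \<Longrightarrow> \<exists>P. P \<in> TOP \<and> interior_pt P \<and> X = cls P"
proof -
  assume "X \<in> CL"
  then obtain P0 where "P0 \<in> TOP" "X = cls P0" by (auto simp: CL_eq)
  then show ?thesis using nf_TOP nf_interior nf_nf cls_eq
    by (intro exI[of _ "nf P0"]) auto
qed

lemma cls_inj: "P \<in> TOP \<Longrightarrow> Q \<in> TOP \<Longrightarrow> interior_pt P \<Longrightarrow> interior_pt Q \<Longrightarrow> cls P = cls Q \<Longrightarrow> P = Q"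
  using cls_eq nf_of_interior by metis

lemma jproj_fibre_finite:
  assumes a: "a \<in> CL"
  shows "finite {w \<in> topspace (realisation (jcells n Cs) (jface n d)). jproj n Cs d w = a}"
proof -
  interpret JC: cset "jcells n Cs" "jface n d" by (rule J_cset)
  obtain A where A: "A \<in> TOP" "interior_pt A" "a = cls A" using CL_rep[OF a] by blast
  obtain m c u where Ae: "A = ((m, c), u)" by (metis prod.collapse)
  define tS where "tS = (\<lambda>S j. if j < card S then u (sorted_list_of_set S ! j - 1) else 0)"
  have "{w \<in> topspace (realisation (jcells n Cs) (jface n d)). jproj n Cs d w = a}
      \<subseteq> (\<lambda>S. JC.cls ((m - n, (c, S)), tS S)) ` Pow {1..m}"
  proof
    fix w assume w: "w \<in> {w \<in> topspace (realisation (jcells n Cs) (jface n d)). jproj n Cs d w = a}"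
    then have "w \<in> JC.CL" by (simp add: JC.topspace_real)
    then obtain P where P: "P \<in> JC.TOP" "interior_pt P" "w = JC.cls P" using JC.CL_rep by blast
    obtain k x S t where Pe: "P = ((k, (x, S)), t)" by (metis prod.collapse)
    have "cls (gpj n P) = cls A" using w P A jproj_cls[OF P(1)] by simp
    then have "gpj n P = A" using cls_inj gp_TOP[OF P(1)] A gp_interior[OF P(1,2)] by blast
    then have e: "n + k = m" "x = c" "jsect S (n + k) t = u" using Ae Pe by (auto simp: gpj_def)
    have PT: "x \<in> Cs (n + k)" "S \<subseteq> {1..n + k}" "card S = k" "t \<in> cube k" using P(1) Pe by (auto simp: TOPJ)
    have fS: "finite S" using PT(2) by (rule finite_subset) simp
    have tt: "t = tS S"
    proof
      fix j
      show "t j = tS S j"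
      proof (cases "j < card S")
        case True
        define s where "s = sorted_list_of_set S ! j"
        have s: "s \<in> S" "card {q \<in> S. q < s} = j" using nth_rank[OF fS True] by (auto simp: s_def)
        have s1: "1 \<le> s" "s \<le> n + k" using s PT by auto
        have "{q \<in> S. q \<le> s - 1} = {q \<in> S. q < s}" using s1 by auto
        then have "jsect S (n + k) t (s - 1) = t j" using s s1 by (simp add: jsect_def)
        then show ?thesis using e True by (simp add: tS_def s_def)
      next
        case False
        then show ?thesis using PT by (simp add: tS_def cube_def)
      qed
    qed
    have mk: "m - n = k" using e(1) by simp
    have "w = JC.cls ((m - n, (c, S)), tS S)" using P Pe e tt mk by simp
    moreover have "S \<in> Pow {1..m}" using PT e by auto
    ultimately show "w \<in> (\<lambda>S. JC.cls ((m - n, (c, S)), tS S)) ` Pow {1..m}" by blast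
  qed
  then show ?thesis by (rule finite_subset) simp
qed

end

theorem proposition3p5:
  fixes Cs :: "nat \<Rightarrow> 'a set" and dC :: "nat \<Rightarrow> nat \<Rightarrow> bool \<Rightarrow> 'a \<Rightarrow> 'a"
    and Ds :: "nat \<Rightarrow> 'b set" and dD :: "nat \<Rightarrow> nat \<Rightarrow> bool \<Rightarrow> 'b \<Rightarrow> 'b"
    and f :: "nat \<Rightarrow> 'a \<Rightarrow> 'b" and n :: nat
  assumes "is_cset Cs dC" and "is_cset Ds dD" and "is_cmap Cs dC Ds dD f"
  shows "homeomorphic_map (realisation (jcells n Cs) (jface n dC))
           (subtopology (prod_topology (realisation Cs dC) (realisation (jcells n Ds) (jface n dD)))
              {(a, b). realmap Ds dD f a = jproj n Ds dD b})
           (\<lambda>w. (jproj n Cs dC w, jmap n Ds dD f w))"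
proof -
  interpret C: cset Cs dC by (rule cset.intro) (rule assms(1))
  interpret D: cset Ds dD by (rule cset.intro) (rule assms(2))
  interpret JC: cset "jcells n Cs" "jface n dC" by (rule C.J_cset)
  interpret JD: cset "jcells n Ds" "jface n dD" by (rule D.J_cset)
  interpret CD: cset2 Cs dC Ds dD ..
  interpret JJ: cset2 "jcells n Cs" "jface n dC" "jcells n Ds" "jface n dD" ..
  interpret JCC: cset2 "jcells n Cs" "jface n dC" Cs dC ..
  note fm = assms(3)
  define XJ where "XJ = realisation (jcells n Cs) (jface n dC)"
  define XC where "XC = realisation Cs dC"
  define YJ where "YJ = realisation (jcells n Ds) (jface n dD)"
  define FP where "FP = {(a, b). realmap Ds dD f a = jproj n Ds dD b}"
  define g where "g = (\<lambda>w. (jproj n Cs dC w, jmap n Ds dD f w))"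
  have jm_cls: "jmap n Ds dD f (JC.cls P) = JD.cls (gmj n f P)" if "P \<in> JC.TOP" for P
    unfolding jmap_eq using JJ.lift_cls[of "gmj n f", OF gm_TOP[OF fm] gm_resp[OF D.cset_axioms fm] that] by simp
  have rm_cls: "realmap Ds dD f (C.cls A) = D.cls (grm f A)" if "A \<in> C.TOP" for A
    unfolding realmap_eq using CD.lift_cls[of "grm f", OF gr_TOP[OF fm] gr_resp[OF D.cset_axioms fm] that] by simp
  have jpC: "jproj n Cs dC (JC.cls P) = C.cls (gpj n P)" if "P \<in> JC.TOP" for P
    using C.jproj_cls[OF that] .
  have jpD: "jproj n Ds dD (JD.cls B) = D.cls (gpj n B)" if "B \<in> JD.TOP" for B
    using D.jproj_cls[OF that] .
  have comm: "grm f (gpj n P) = gpj n (gmj n f P)" for P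
    by (cases P) (auto simp: grm_def gpj_def gmj_def)
  have top: "topspace (subtopology (prod_topology XC YJ) FP) = (C.CL \<times> JD.CL) \<inter> FP"
    by (simp add: XC_def YJ_def C.topspace_real JD.topspace_real)
  have c1: "continuous_map XJ XC (jproj n Cs dC)"
    unfolding XJ_def XC_def jproj_eq
    by (rule JCC.lift_cont[of "gpj n", OF gp_TOP gp_resp[OF C.cset_axioms] cont_gp])
  have c2: "continuous_map XJ YJ (jmap n Ds dD f)"
    unfolding XJ_def YJ_def jmap_eq
    by (rule JJ.lift_cont[of "gmj n f", OF gm_TOP[OF fm] gm_resp[OF D.cset_axioms fm] cont_gm[OF fm]])
  have into: "g w \<in> (C.CL \<times> JD.CL) \<inter> FP" if wC: "w \<in> JC.CL" for w
  proof -
    obtain P where P: "P \<in> JC.TOP" "interior_pt P" "w = JC.cls P" using JC.CL_rep[OF wC] by blast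
    have g1: "gpj n P \<in> C.TOP" using gp_TOP[OF P(1)] .
    have g2: "gmj n f P \<in> JD.TOP" using gm_TOP[OF fm P(1)] .
    have "realmap Ds dD f (C.cls (gpj n P)) = jproj n Ds dD (JD.cls (gmj n f P))"
      using rm_cls[OF g1] jpD[OF g2] comm by simp
    then show ?thesis using P g1 g2 jpC jm_cls by (auto simp: g_def FP_def C.CL_eq JD.CL_eq)
  qed
  have cg: "continuous_map XJ (subtopology (prod_topology XC YJ) FP) g"
  proof (rule continuous_map_into_subtopology)
    show "continuous_map XJ (prod_topology XC YJ) g" unfolding g_def using c1 c2 by (simp add: continuous_map_paired)
    show "g \<in> topspace XJ \<rightarrow> FP" using into by (auto simp: XJ_def JC.topspace_real)
  qed
  have inj: "inj_on g (topspace XJ)"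
  proof
    fix w1 w2 assume w: "w1 \<in> topspace XJ" "w2 \<in> topspace XJ" "g w1 = g w2"
    have wC: "w1 \<in> JC.CL" "w2 \<in> JC.CL" using w by (simp_all add: XJ_def JC.topspace_real)
    obtain P1 where P1: "P1 \<in> JC.TOP" "interior_pt P1" "w1 = JC.cls P1" using JC.CL_rep[OF wC(1)] by blast
    obtain P2 where P2: "P2 \<in> JC.TOP" "interior_pt P2" "w2 = JC.cls P2" using JC.CL_rep[OF wC(2)] by blast
    have "JD.cls (gmj n f P1) = JD.cls (gmj n f P2)" using w(3) P1 P2 jm_cls by (simp add: g_def)
    then have e1: "gmj n f P1 = gmj n f P2"
      using JD.cls_inj gm_TOP[OF fm P1(1)] gm_TOP[OF fm P2(1)] gm_interior P1(2) P2(2) by metis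
    have "C.cls (gpj n P1) = C.cls (gpj n P2)" using w(3) P1 P2 jpC by (simp add: g_def)
    then have e2: "gpj n P1 = gpj n P2"
      using C.cls_inj gp_TOP[OF P1(1)] gp_TOP[OF P2(1)] gp_interior P1 P2 by metis
    have "P1 = P2" using e1 e2
      by (cases P1; cases P2) (auto simp: gmj_def gpj_def)
    then show "w1 = w2" using P1 P2 by simp
  qed
  have surj: "g ` topspace XJ = topspace (subtopology (prod_topology XC YJ) FP)"
  proof
    show "g ` topspace XJ \<subseteq> topspace (subtopology (prod_topology XC YJ) FP)"
    proof
      fix z assume "z \<in> g ` topspace XJ"
      then obtain w where "w \<in> JC.CL" "z = g w" by (auto simp: XJ_def JC.topspace_real)
      then show "z \<in> topspace (subtopology (prod_topology XC YJ) FP)" using into[of w] top by simp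
    qed
    show "topspace (subtopology (prod_topology XC YJ) FP) \<subseteq> g ` topspace XJ"
    proof
      fix ab assume "ab \<in> topspace (subtopology (prod_topology XC YJ) FP)"
      then obtain a b where ab: "ab = (a, b)" "a \<in> C.CL" "b \<in> JD.CL" "realmap Ds dD f a = jproj n Ds dD b"
        using top by (auto simp: FP_def)
      obtain A where A: "A \<in> C.TOP" "interior_pt A" "a = C.cls A" using C.CL_rep[OF ab(2)] by blast
      obtain B where B: "B \<in> JD.TOP" "interior_pt B" "b = JD.cls B" using JD.CL_rep[OF ab(3)] by blast
      have "D.cls (grm f A) = D.cls (gpj n B)" using ab A B rm_cls jpD by simp
      then have e: "grm f A = gpj n B"
        using D.cls_inj gr_TOP[OF fm A(1)] gp_TOP[OF B(1)] gr_interior A(2) gp_interior[OF B(1,2)] by metis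
      obtain m c u where Ae: "A = ((m, c), u)" by (metis prod.collapse)
      obtain k y S t where Be: "B = ((k, (y, S)), t)" by (metis prod.collapse)
      have ee: "m = n + k" "f m c = y" "u = jsect S (n + k) t" using e Ae Be by (auto simp: grm_def gpj_def)
      define P where "P = ((k, (c, S)), t)"
      have PT: "P \<in> JC.TOP" using A B Ae Be ee by (auto simp: P_def TOPJ C.TOP_iff)
      have "gpj n P = A" "gmj n f P = B" using Ae Be ee by (auto simp: P_def gpj_def gmj_def)
      then have "g (JC.cls P) = (a, b)" using A B jpC[OF PT] jm_cls[OF PT] by (simp add: g_def)
      moreover have "JC.cls P \<in> topspace XJ" using PT by (auto simp: XJ_def JC.topspace_real JC.CL_eq)
      ultimately show "ab \<in> g ` topspace XJ" using ab by force
    qed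
  qed
  have pr: "proper_map XJ XC (fst \<circ> g)"
  proof -
    have "fst \<circ> g = jproj n Cs dC" by (simp add: g_def o_def)
    moreover have "proper_map XJ XC (jproj n Cs dC)"
      unfolding proper_map_def
    proof (intro conjI ballI)
      show "closed_map XJ XC (jproj n Cs dC)" unfolding XJ_def XC_def by (rule C.jproj_closed)
      fix y assume "y \<in> topspace XC"
      then have "finite {x \<in> topspace XJ. jproj n Cs dC x = y}"
        unfolding XJ_def XC_def using C.jproj_fibre_finite by (simp add: C.topspace_real)
      then show "compactin XJ {x \<in> topspace XJ. jproj n Cs dC x = y}" by (intro finite_imp_compactin) auto
    qed
    ultimately show ?thesis by simp
  qed
  have hs: "Hausdorff_space (subtopology (prod_topology XC YJ) FP)"
    using C.hausdorff JD.hausdorff unfolding XC_def YJ_def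
    by (intro Hausdorff_space_subtopology) (simp add: Hausdorff_space_prod_topology)
  have cf: "continuous_map (subtopology (prod_topology XC YJ) FP) XC fst"
    by (rule continuous_map_from_subtopology[OF continuous_map_fst])
  have "proper_map XJ (subtopology (prod_topology XC YJ) FP) g"
    by (rule proper_map_from_composition_right[OF hs pr cg cf])
  then have "closed_map XJ (subtopology (prod_topology XC YJ) FP) g" by (rule proper_imp_closed_map)
  then have "homeomorphic_map XJ (subtopology (prod_topology XC YJ) FP) g"
    using bijective_closed_imp_homeomorphic_map cg surj inj by blast
  then show ?thesis by (simp add: XJ_def XC_def YJ_def FP_def g_def)
qed

end
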